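(* Let $\alpha\in(0,2)$ and let $(X_j)_{j\ge1}$ be i.i.d. real random variables with distribution function $F_0$ satisfying $\lim_{x\to+\infty}x^\alpha(1-F_0(x))=c_0^+<\infty$, $\lim_{x\to-\infty}|x|^\alpha F_0(x)=c_0^-<\infty$, with $c_0:=c_0^++c_0^->0$. If $\alpha=1$ assume moreover $c_0^+=c_0^-$ and $\lim_{R\to+\infty}\int_{(-R,R)}x\,dF_0(x)=\gamma_0\in(-\infty,+\infty)$; if $\alpha>1$ assume $\mathbb E[X_1]=0$. Let $[b_{jn}:j=1,\dots,n;\ n\ge1]$ be an array of non-negative real numbers, $S_n:=\sum_{j=1}^n b_{jn}X_j$ and $b(n):=\max_{1\le j\le n}b_{jn}$. If $b(n)\to0$, $\sum_{j=1}^n b_{jn}^\alpha\to1$ and $x_n\to+\infty$, then \[ \lim_{n\to+\infty}x_n^\alpha P\{|S_n|>x_n\}=c_0. \] *)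

theory Defs
  imports "HOL-Probability.Probability"
begin

end

theory Submission
  imports Defs
begin

lemma powr_scale_id:
  fixes x a b \<alpha> :: real
  assumes "x > 0" "a > 0" "b > 0"
  shows "x powr \<alpha> * (a * x / b) powr (-\<alpha>) = a powr (-\<alpha>) * b powr \<alpha>"
  using assms by (simp add: powr_divide powr_mult powr_minus divide_simps)

lemma main_sum:
  fixes G :: "real \<Rightarrow> real" and b :: "nat \<Rightarrow> nat \<Rightarrow> real" and xs :: "nat \<Rightarrow> real"
  assumes G: "((\<lambda>t. t powr \<alpha> * G t) \<longlongrightarrow> L) at_top"
    and a: "a > 0"
    and b_nonneg: "\<And>j n. 1 \<le> j \<Longrightarrow> j \<le> n \<Longrightarrow> b j n \<ge> 0"
    and b_max: "(\<lambda>n. Max ((\<lambda>j. b j n) ` {1..n})) \<longlonglongrightarrow> 0"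
    and b_sum: "(\<lambda>n. \<Sum>j=1..n. b j n powr \<alpha>) \<longlonglongrightarrow> 1"
    and xs_lim: "filterlim xs at_top sequentially"
  shows "(\<lambda>n. xs n powr \<alpha> * (\<Sum>j=1..n. if b j n > 0 then G (a * xs n / b j n) else 0))
          \<longlonglongrightarrow> L * a powr (-\<alpha>)"
proof -
  define s where "s n = (\<Sum>j=1..n. b j n powr \<alpha>)" for n
  define D where "D n = xs n powr \<alpha> * (\<Sum>j=1..n. if b j n > 0 then G (a * xs n / b j n) else 0)
       - L * a powr (-\<alpha>) * s n" for n
  have s2: "eventually (\<lambda>n. s n \<le> 2) sequentially"
  proof -
    have "s \<longlonglongrightarrow> 1" using b_sum by (simp add: s_def[abs_def])
    hence "eventually (\<lambda>n. s n < 2) sequentially" by (rule order_tendstoD) simp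
    thus ?thesis by eventually_elim simp
  qed
  have D0: "D \<longlonglongrightarrow> 0"
  proof (rule tendstoI)
    fix e :: real assume e: "e > 0"
    define e' where "e' = e / (4 * a powr (-\<alpha>))"
    have e': "e' > 0" using e a by (simp add: e'_def)
    from G have "eventually (\<lambda>t. dist (t powr \<alpha> * G t) L < e') at_top"
      using e' by (rule tendstoD)
    then obtain t1 where t1: "\<And>t. t \<ge> t1 \<Longrightarrow> \<bar>t powr \<alpha> * G t - L\<bar> < e'"
      by (auto simp: eventually_at_top_linorder dist_real_def)
    have ev1: "eventually (\<lambda>n. xs n \<ge> max t1 1) sequentially"
      using xs_lim filterlim_at_top by blast
    have ev2: "eventually (\<lambda>n. Max ((\<lambda>j. b j n) ` {1..n}) < a) sequentially"
      using b_max a by (intro order_tendstoD) auto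
    show "eventually (\<lambda>n. dist (D n) 0 < e) sequentially"
      using ev1 ev2 s2
    proof eventually_elim
      case (elim n)
      have xpos: "xs n > 0" using elim by auto
      have bound: "\<bar>xs n powr \<alpha> * (if b j n > 0 then G (a * xs n / b j n) else 0)
             - L * a powr (-\<alpha>) * b j n powr \<alpha>\<bar> \<le> e' * a powr (-\<alpha>) * b j n powr \<alpha>"
        if j: "j \<in> {1..n}" for j
      proof (cases "b j n > 0")
        case True
        have "b j n \<le> Max ((\<lambda>j. b j n) ` {1..n})" using j by (intro Max_ge) auto
        hence "b j n < a" using elim by auto
        define t where "t = a * xs n / b j n"
        have "t \<ge> xs n" unfolding t_def using True \<open>b j n < a\<close> xpos
          by (simp add: field_simps)
        hence "t \<ge> t1" using elim by auto
        hence tb: "\<bar>t powr \<alpha> * G t - L\<bar> < e'" by (rule t1)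
        have tpos: "t > 0" using True xpos a by (simp add: t_def)
        have eq: "xs n powr \<alpha> * G t = a powr (-\<alpha>) * b j n powr \<alpha> * (t powr \<alpha> * G t)"
        proof -
          have "xs n powr \<alpha> = xs n powr \<alpha> * (t powr (-\<alpha>) * t powr \<alpha>)"
            using tpos by (simp add: powr_minus)
          also have "\<dots> = (xs n powr \<alpha> * t powr (-\<alpha>)) * t powr \<alpha>" by simp
          also have "xs n powr \<alpha> * t powr (-\<alpha>) = a powr (-\<alpha>) * b j n powr \<alpha>"
            unfolding t_def using xpos a True by (rule powr_scale_id)
          finally show ?thesis by simp
        qed
        have "\<bar>a powr (-\<alpha>) * b j n powr \<alpha> * (t powr \<alpha> * G t) - L * a powr (-\<alpha>) * b j n powr \<alpha>\<bar>
              = a powr (-\<alpha>) * b j n powr \<alpha> * \<bar>t powr \<alpha> * G t - L\<bar>"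
        proof -
          have "a powr (-\<alpha>) * b j n powr \<alpha> * (t powr \<alpha> * G t) - L * a powr (-\<alpha>) * b j n powr \<alpha>
              = (a powr (-\<alpha>) * b j n powr \<alpha>) * (t powr \<alpha> * G t - L)" by (simp add: algebra_simps)
          thus ?thesis by (simp only: abs_mult) simp
        qed
        also have "\<dots> \<le> a powr (-\<alpha>) * b j n powr \<alpha> * e'"
          using tb by (intro mult_left_mono) auto
        finally have calc: "\<bar>a powr (-\<alpha>) * b j n powr \<alpha> * (t powr \<alpha> * G t) - L * a powr (-\<alpha>) * b j n powr \<alpha>\<bar>
             \<le> a powr (-\<alpha>) * b j n powr \<alpha> * e'" .
        have "\<bar>xs n powr \<alpha> * G t - L * a powr (-\<alpha>) * b j n powr \<alpha>\<bar> \<le> e' * a powr (-\<alpha>) * b j n powr \<alpha>"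
          using calc by (simp only: eq) (simp add: mult_ac)
        thus ?thesis using True unfolding t_def by simp
      next
        case False
        hence "b j n = 0" using b_nonneg[of j n] j by force
        thus ?thesis using e' by simp
      qed
      have "\<bar>D n\<bar> = \<bar>\<Sum>j=1..n. (xs n powr \<alpha> * (if b j n > 0 then G (a * xs n / b j n) else 0)
             - L * a powr (-\<alpha>) * b j n powr \<alpha>)\<bar>"
        by (simp add: D_def s_def sum_subtractf sum_distrib_left)
      also have "\<dots> \<le> (\<Sum>j=1..n. e' * a powr (-\<alpha>) * b j n powr \<alpha>)"
        by (rule order_trans[OF sum_abs sum_mono]) (rule bound)
      also have "\<dots> = e' * a powr (-\<alpha>) * s n" by (simp add: s_def sum_distrib_left)
      also have "\<dots> \<le> e' * a powr (-\<alpha>) * 2"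
        using elim e' by (intro mult_left_mono) auto
      also have "\<dots> < e" using e a by (simp add: e'_def)
      finally show ?case by (simp add: dist_real_def)
    qed
  qed
  have "(\<lambda>n. D n + L * a powr (-\<alpha>) * s n) \<longlonglongrightarrow> 0 + L * a powr (-\<alpha>) * 1"
    by (intro tendsto_intros D0) (use b_sum in \<open>simp add: s_def\<close>)
  thus ?thesis by (simp add: D_def)
qed


lemma pw1:
  fixes R p \<alpha> :: real
  assumes "R > 0"
  shows "(R/2^k) powr p * (R/2^(Suc k)) powr (-\<alpha>) = 2 powr \<alpha> * R powr (p-\<alpha>) * (2 powr (\<alpha>-p))^k"
proof (rule ln_inj_iff[THEN iffD1])
  show "0 < (R/2^k) powr p * (R/2^(Suc k)) powr (-\<alpha>)" using assms by simp
  show "0 < 2 powr \<alpha> * R powr (p-\<alpha>) * (2 powr (\<alpha>-p))^k" using assms by simp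
  show "ln ((R/2^k) powr p * (R/2^(Suc k)) powr (-\<alpha>)) = ln (2 powr \<alpha> * R powr (p-\<alpha>) * (2 powr (\<alpha>-p))^k)"
    using assms by (simp add: ln_mult ln_div ln_powr ln_realpow algebra_simps)
qed
lemma pw2:
  fixes R \<alpha> :: real
  assumes "R > 0"
  shows "R*2^(Suc k) * (R*2^k) powr (-\<alpha>) = 2 * R powr (1-\<alpha>) * (2 powr (1-\<alpha>))^k"
proof (rule ln_inj_iff[THEN iffD1])
  show "0 < R*2^(Suc k) * (R*2^k) powr (-\<alpha>)" using assms by simp
  show "0 < 2 * R powr (1-\<alpha>) * (2 powr (1-\<alpha>))^k" using assms by simp
  show "ln (R*2^(Suc k) * (R*2^k) powr (-\<alpha>)) = ln (2 * R powr (1-\<alpha>) * (2 powr (1-\<alpha>))^k)"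
    using assms by (simp add: ln_mult ln_div ln_powr ln_realpow algebra_simps)
qed
lemma exN:
  fixes t0 R :: real
  assumes "t0 > 0" "t0 \<le> R"
  shows "\<exists>N. t0 * 2^N \<le> R \<and> R < t0 * 2^(Suc N)"
proof -
  obtain n where n: "R / t0 < 2^n" using real_arch_pow[of 2 "R/t0"] by auto
  have ex: "R < t0 * 2^(Suc n)"
  proof -
    have "R < t0 * 2^n" using n assms by (simp add: field_simps)
    also have "\<dots> \<le> t0 * 2^(Suc n)" using assms by simp
    finally show ?thesis .
  qed
  define N where "N = (LEAST n. R < t0 * 2^(Suc n))"
  have "R < t0 * 2^(Suc N)" unfolding N_def by (rule LeastI[of "\<lambda>n. R < t0 * 2^(Suc n)", OF ex])
  moreover have "t0 * 2^N \<le> R"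
  proof (cases N)
    case 0 thus ?thesis using assms by simp
  next
    case (Suc m)
    have "\<not> R < t0 * 2^(Suc m)" using not_less_Least[of m "\<lambda>n. R < t0 * 2^(Suc n)"] Suc N_def by simp
    thus ?thesis using Suc by simp
  qed
  ultimately show ?thesis by blast
qed
lemma dyad_low:
  fixes y R t0 p :: real
  assumes t0: "t0 > 0" and p: "p > 0" and N: "t0 * 2^N \<le> R" "R < t0 * 2^(Suc N)" and y: "\<bar>y\<bar> \<le> R"
  shows "\<bar>y\<bar> powr p \<le> (2*t0) powr p + (\<Sum>k<N. (R/2^k) powr p * (if \<bar>y\<bar> > R/2^(Suc k) then 1 else 0))"
proof -
  have R0: "R > 0" using t0 N(1) by (smt (verit) mult_pos_pos zero_less_power)
  have snn: "0 \<le> (\<Sum>k<N. (R/2^k) powr p * (if \<bar>y\<bar> > R/2^(Suc k) then 1 else 0))"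
    by (intro sum_nonneg) auto
  show ?thesis
  proof (cases "\<bar>y\<bar> \<le> R/2^N")
    case True
    have "R/2^N < 2*t0" using N(2) by (simp add: field_simps)
    hence "\<bar>y\<bar> powr p \<le> (2*t0) powr p" using True p by (intro powr_mono2) auto
    thus ?thesis using snn by linarith
  next
    case False
    have N0: "N > 0" using False y by (cases N) auto
    have ex: "\<bar>y\<bar> > R/2^(Suc (N-1))" using False N0 by simp
    define k where "k = (LEAST k. \<bar>y\<bar> > R/2^(Suc k))"
    have k1: "\<bar>y\<bar> > R/2^(Suc k)" unfolding k_def by (rule LeastI[of "\<lambda>k. \<bar>y\<bar> > R/2^(Suc k)", OF ex])
    have "k \<le> N - 1" unfolding k_def by (rule Least_le[of "\<lambda>k. \<bar>y\<bar> > R/2^(Suc k)", OF ex])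
    hence kN: "k < N" using N0 by simp
    have k2: "\<bar>y\<bar> \<le> R/2^k"
    proof (cases k)
      case 0 thus ?thesis using y by simp
    next
      case (Suc m)
      have "\<not> \<bar>y\<bar> > R/2^(Suc m)" using not_less_Least[of m "\<lambda>k. \<bar>y\<bar> > R/2^(Suc k)"] Suc k_def by simp
      thus ?thesis using Suc by simp
    qed
    have "\<bar>y\<bar> powr p \<le> (R/2^k) powr p" using k2 p by (intro powr_mono2) auto
    also have "\<dots> = (R/2^k) powr p * (if \<bar>y\<bar> > R/2^(Suc k) then 1 else 0)" using k1 by simp
    also have "\<dots> \<le> (\<Sum>k<N. (R/2^k) powr p * (if \<bar>y\<bar> > R/2^(Suc k) then 1 else 0))"
      by (rule member_le_sum) (use kN in auto)
    finally show ?thesis using p by (smt (verit) powr_ge_zero)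
  qed
qed

lemma dyad_up:
  fixes y R :: real
  assumes R: "R > 0"
  shows "(if R < \<bar>y\<bar> \<and> \<bar>y\<bar> \<le> R*2^N then \<bar>y\<bar> else 0) \<le> (\<Sum>k<N. R*2^(Suc k) * (if \<bar>y\<bar> > R*2^k then 1 else 0))"
proof (cases "R < \<bar>y\<bar> \<and> \<bar>y\<bar> \<le> R*2^N")
  case False
  thus ?thesis using R by (auto intro!: sum_nonneg)
next
  case True
  have N0: "N > 0" using True by (cases N) auto
  have ex: "\<bar>y\<bar> \<le> R*2^(Suc (N-1))" using True N0 by simp
  define k where "k = (LEAST k. \<bar>y\<bar> \<le> R*2^(Suc k))"
  have k1: "\<bar>y\<bar> \<le> R*2^(Suc k)" unfolding k_def by (rule LeastI[of "\<lambda>k. \<bar>y\<bar> \<le> R*2^(Suc k)", OF ex])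
  have "k \<le> N - 1" unfolding k_def by (rule Least_le[of "\<lambda>k. \<bar>y\<bar> \<le> R*2^(Suc k)", OF ex])
  hence kN: "k < N" using N0 by simp
  have k2: "\<bar>y\<bar> > R*2^k"
  proof (cases k)
    case 0 thus ?thesis using True by simp
  next
    case (Suc m)
    have "\<not> \<bar>y\<bar> \<le> R*2^(Suc m)" using not_less_Least[of m "\<lambda>k. \<bar>y\<bar> \<le> R*2^(Suc k)"] Suc k_def by simp
    thus ?thesis using Suc by simp
  qed
  have "(if R < \<bar>y\<bar> \<and> \<bar>y\<bar> \<le> R*2^N then \<bar>y\<bar> else 0) \<le> R*2^(Suc k)" using True k1 by simp
  also have "\<dots> = R*2^(Suc k) * (if \<bar>y\<bar> > R*2^k then 1 else 0)" using k2 by simp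
  also have "\<dots> \<le> (\<Sum>k<N. R*2^(Suc k) * (if \<bar>y\<bar> > R*2^k then 1 else 0))"
    by (rule member_le_sum) (use kN R in auto)
  finally show ?thesis .
qed

locale hsetup = prob_space M for M :: "'a measure" +
  fixes X :: "nat \<Rightarrow> 'a \<Rightarrow> real"
  assumes Xm[measurable]: "\<And>i. X i \<in> borel_measurable M"
    and indep: "indep_vars (\<lambda>_. borel) X {1..}"
    and ident: "\<And>j. j \<ge> 1 \<Longrightarrow> distr M borel (X j) = distr M borel (X 1)"
begin

lemma ident_int:
  fixes f :: "real \<Rightarrow> real"
  assumes "j \<ge> 1" and f[measurable]: "f \<in> borel_measurable borel"
  shows "(\<integral>\<omega>. f (X j \<omega>) \<partial>M) = (\<integral>\<omega>. f (X 1 \<omega>) \<partial>M)"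
proof -
  have "(\<integral>\<omega>. f (X j \<omega>) \<partial>M) = integral\<^sup>L (distr M borel (X j)) f"
    by (rule integral_distr[symmetric]) auto
  also have "\<dots> = integral\<^sup>L (distr M borel (X 1)) f" using ident[OF assms(1)] by simp
  also have "\<dots> = (\<integral>\<omega>. f (X 1 \<omega>) \<partial>M)" by (rule integral_distr) auto
  finally show ?thesis .
qed

lemma bint:
  fixes h :: "'a \<Rightarrow> real" and B :: real
  assumes [measurable]: "h \<in> borel_measurable M" and "\<And>\<omega>. \<bar>h \<omega>\<bar> \<le> B"
  shows "integrable M h"
  using assms by (intro integrable_const_bound[where B=B]) auto

lemma prodexp:
  fixes f :: "nat \<Rightarrow> real \<Rightarrow> real" and B :: real
  assumes fin: "finite I" and sub: "I \<subseteq> {1..}"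
    and fm: "\<And>i. i \<in> I \<Longrightarrow> f i \<in> borel_measurable borel"
    and fb: "\<And>i y. i \<in> I \<Longrightarrow> \<bar>f i y\<bar> \<le> B"
  shows "(\<integral>\<omega>. (\<Prod>i\<in>I. f i (X i \<omega>)) \<partial>M) = (\<Prod>i\<in>I. \<integral>\<omega>. f i (X i \<omega>) \<partial>M)"
proof -
  have ind: "indep_vars (\<lambda>_. borel) (\<lambda>i \<omega>. f i (X i \<omega>)) I"
    by (rule indep_vars_compose2[OF indep_vars_subset[OF indep sub]]) (use fm in auto)
  have "\<And>i. i \<in> I \<Longrightarrow> integrable M (\<lambda>\<omega>. f i (X i \<omega>))"
  proof -
    fix i assume i: "i \<in> I"
    note [measurable] = fm[OF i]
    show "integrable M (\<lambda>\<omega>. f i (X i \<omega>))" by (rule bint[where B=B]) (use fb[OF i] in auto)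
  qed
  thus ?thesis by (intro indep_vars_lebesgue_integral[OF fin ind])
qed

lemma prob_le_int:
  fixes f :: "'a \<Rightarrow> real"
  assumes S: "S \<in> sets M" and le: "\<And>\<omega>. \<omega> \<in> space M \<Longrightarrow> indicator S \<omega> \<le> f \<omega>"
    and fi: "integrable M f"
  shows "prob S \<le> (\<integral>\<omega>. f \<omega> \<partial>M)"
proof -
  have "prob S = (\<integral>\<omega>. indicator S \<omega> \<partial>M)" using S sets.sets_into_space[OF S]
    by (simp add: Int_absorb2)
  also have "\<dots> \<le> (\<integral>\<omega>. f \<omega> \<partial>M)"
    by (rule integral_mono) (use S fi le in \<open>auto intro!: integrable_real_indicator simp: less_top[symmetric]\<close>)
  finally show ?thesis .
qed

lemma int_le_prob:
  fixes f :: "'a \<Rightarrow> real"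
  assumes S: "S \<in> sets M" and le: "\<And>\<omega>. \<omega> \<in> space M \<Longrightarrow> f \<omega> \<le> indicator S \<omega>"
    and fi: "integrable M f"
  shows "(\<integral>\<omega>. f \<omega> \<partial>M) \<le> prob S"
proof -
  have "(\<integral>\<omega>. f \<omega> \<partial>M) \<le> (\<integral>\<omega>. indicator S \<omega> \<partial>M)"
    by (rule integral_mono) (use S fi le in \<open>auto intro!: integrable_real_indicator simp: less_top[symmetric]\<close>)
  also have "\<dots> = prob S" using S sets.sets_into_space[OF S]
    by (simp add: Int_absorb2)
  finally show ?thesis .
qed

lemma sq_exp:
  fixes g :: "real \<Rightarrow> real" and h :: "nat \<Rightarrow> real \<Rightarrow> real" and Bg B :: real
  assumes fin: "finite I" and sub: "I \<subseteq> {1..}" and j: "j \<ge> 1" "j \<notin> I"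
    and gm[measurable]: "g \<in> borel_measurable borel" and gb: "\<And>y. 0 \<le> g y" "\<And>y. g y \<le> Bg"
    and hm: "\<And>i. i \<in> I \<Longrightarrow> h i \<in> borel_measurable borel"
    and hb: "\<And>i y. i \<in> I \<Longrightarrow> \<bar>h i y\<bar> \<le> B"
  shows "(\<integral>\<omega>. g (X j \<omega>) * (\<Sum>i\<in>I. h i (X i \<omega>))\<^sup>2 \<partial>M)
     \<le> (\<integral>\<omega>. g (X j \<omega>) \<partial>M) * ((\<Sum>i\<in>I. \<integral>\<omega>. (h i (X i \<omega>))\<^sup>2 \<partial>M) + (\<Sum>i\<in>I. \<bar>\<integral>\<omega>. h i (X i \<omega>) \<partial>M\<bar>)\<^sup>2)"
proof -
  define Eg where "Eg = (\<integral>\<omega>. g (X j \<omega>) \<partial>M)"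
  define E1 where "E1 i = (\<integral>\<omega>. h i (X i \<omega>) \<partial>M)" for i
  define E2 where "E2 i = (\<integral>\<omega>. (h i (X i \<omega>))\<^sup>2 \<partial>M)" for i
  have Bg0: "0 \<le> Bg" using gb[of 0] by linarith
  have Eg0: "Eg \<ge> 0" unfolding Eg_def by (rule integral_nonneg_AE) (use gb in auto)
  have B0: "0 \<le> B" if "I \<noteq> {}" using that hb[of _ 0] by force
  have trm: "(\<integral>\<omega>. g (X j \<omega>) * (h i (X i \<omega>) * h k (X k \<omega>)) \<partial>M)
      = Eg * (if i = k then E2 i else E1 i * E1 k)" if ik: "i \<in> I" "k \<in> I" for i k
  proof (cases "i = k")
    case True
    define F where "F l = (if l = j then g else (\<lambda>y. (h i y)\<^sup>2))" for l
    have jni: "j \<noteq> i" using j ik by auto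
    have "(\<integral>\<omega>. (\<Prod>l\<in>{j,i}. F l (X l \<omega>)) \<partial>M) = (\<Prod>l\<in>{j,i}. \<integral>\<omega>. F l (X l \<omega>) \<partial>M)"
    proof (rule prodexp[where B="max Bg (B\<^sup>2)"])
      show "finite {j, i}" by simp
      show "{j, i} \<subseteq> {1..}" using j sub ik by auto
      show "F l \<in> borel_measurable borel" if "l \<in> {j,i}" for l
        using that hm[OF ik(1)] by (auto simp: F_def)
      show "\<bar>F l y\<bar> \<le> max Bg (B\<^sup>2)" if "l \<in> {j,i}" for l y
      proof -
        have "\<bar>h i y\<bar>\<^sup>2 \<le> B\<^sup>2" using hb[OF ik(1), of y] by (intro power_mono) auto
        thus ?thesis using gb[of y] by (auto simp: F_def)
      qed
    qed
    thus ?thesis using jni True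
      by (simp add: F_def Eg_def E2_def power2_eq_square mult_ac)
  next
    case False
    define F where "F l = (if l = j then g else if l = i then h i else h k)" for l
    have d: "j \<noteq> i" "j \<noteq> k" using j ik by auto
    have "(\<integral>\<omega>. (\<Prod>l\<in>{j,i,k}. F l (X l \<omega>)) \<partial>M) = (\<Prod>l\<in>{j,i,k}. \<integral>\<omega>. F l (X l \<omega>) \<partial>M)"
    proof (rule prodexp[where B="max Bg B"])
      show "finite {j, i, k}" by simp
      show "{j, i, k} \<subseteq> {1..}" using j sub ik by auto
      show "F l \<in> borel_measurable borel" if "l \<in> {j,i,k}" for l
        using that hm[OF ik(1)] hm[OF ik(2)] by (auto simp: F_def)
      show "\<bar>F l y\<bar> \<le> max Bg B" if "l \<in> {j,i,k}" for l y
        using that gb[of y] hb[OF ik(1), of y] hb[OF ik(2), of y] by (auto simp: F_def)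
    qed
    thus ?thesis using d False
      by (simp add: F_def Eg_def E1_def mult_ac)
  qed
  have intg: "integrable M (\<lambda>\<omega>. g (X j \<omega>) * (h i (X i \<omega>) * h k (X k \<omega>)))" if ik: "i \<in> I" "k \<in> I" for i k
  proof -
    note [measurable] = hm[OF ik(1)] hm[OF ik(2)]
    show ?thesis
    proof (rule bint[where B="Bg * (B * B)"])
      fix \<omega>
      have "\<bar>g (X j \<omega>) * (h i (X i \<omega>) * h k (X k \<omega>))\<bar> = g (X j \<omega>) * (\<bar>h i (X i \<omega>)\<bar> * \<bar>h k (X k \<omega>)\<bar>)"
        using gb by (simp add: abs_mult)
      also have "\<dots> \<le> Bg * (B * B)"
        using gb hb[OF ik(1)] hb[OF ik(2)] Bg0
        by (intro mult_mono) (auto intro: mult_mono order_trans[OF abs_ge_zero])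
      finally show "\<bar>g (X j \<omega>) * (h i (X i \<omega>) * h k (X k \<omega>))\<bar> \<le> Bg * (B * B)" .
    qed simp
  qed
  have "(\<integral>\<omega>. g (X j \<omega>) * (\<Sum>i\<in>I. h i (X i \<omega>))\<^sup>2 \<partial>M)
       = (\<integral>\<omega>. (\<Sum>i\<in>I. \<Sum>k\<in>I. g (X j \<omega>) * (h i (X i \<omega>) * h k (X k \<omega>))) \<partial>M)"
  proof (rule arg_cong[where f="integral\<^sup>L M"], rule ext)
    fix \<omega>
    have "(\<Sum>i\<in>I. h i (X i \<omega>))\<^sup>2 = (\<Sum>i\<in>I. \<Sum>k\<in>I. h i (X i \<omega>) * h k (X k \<omega>))"
      by (simp only: power2_eq_square sum_product)
    thus "g (X j \<omega>) * (\<Sum>i\<in>I. h i (X i \<omega>))\<^sup>2 = (\<Sum>i\<in>I. \<Sum>k\<in>I. g (X j \<omega>) * (h i (X i \<omega>) * h k (X k \<omega>)))"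
      by (simp add: sum_distrib_left)
  qed
  also have "\<dots> = (\<Sum>i\<in>I. \<Sum>k\<in>I. (\<integral>\<omega>. g (X j \<omega>) * (h i (X i \<omega>) * h k (X k \<omega>)) \<partial>M))"
    using intg by (simp add: integrable_sum)
  also have "\<dots> = (\<Sum>i\<in>I. \<Sum>k\<in>I. Eg * (if i = k then E2 i else E1 i * E1 k))"
    using trm by (intro sum.cong refl) auto
  also have "\<dots> \<le> (\<Sum>i\<in>I. \<Sum>k\<in>I. (Eg * (if i = k then E2 i else 0) + Eg * (\<bar>E1 i\<bar> * \<bar>E1 k\<bar>)))"
  proof (intro sum_mono)
    fix i k
    show "Eg * (if i = k then E2 i else E1 i * E1 k) \<le> Eg * (if i = k then E2 i else 0) + Eg * (\<bar>E1 i\<bar> * \<bar>E1 k\<bar>)"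
    proof (cases "i = k")
      case True thus ?thesis using Eg0 by simp
    next
      case False
      have "E1 i * E1 k \<le> \<bar>E1 i\<bar> * \<bar>E1 k\<bar>" by (metis abs_ge_self abs_mult)
      thus ?thesis using False Eg0 by (simp add: mult_left_mono)
    qed
  qed
  also have "\<dots> = (\<Sum>i\<in>I. \<Sum>k\<in>I. Eg * (if i = k then E2 i else 0)) + (\<Sum>i\<in>I. \<Sum>k\<in>I. Eg * (\<bar>E1 i\<bar> * \<bar>E1 k\<bar>))"
    by (simp add: sum.distrib)
  also have "(\<Sum>i\<in>I. \<Sum>k\<in>I. Eg * (if i = k then E2 i else 0)) = (\<Sum>i\<in>I. Eg * E2 i)"
  proof (rule sum.cong[OF refl])
    fix i assume "i \<in> I"
    have "(\<Sum>k\<in>I. Eg * (if i = k then E2 i else 0)) = (\<Sum>k\<in>I. (if i = k then Eg * E2 i else 0))"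
      by (intro sum.cong) auto
    also have "\<dots> = Eg * E2 i" using fin \<open>i \<in> I\<close> by (simp add: sum.delta)
    finally show "(\<Sum>k\<in>I. Eg * (if i = k then E2 i else 0)) = Eg * E2 i" .
  qed
  also have "(\<Sum>i\<in>I. \<Sum>k\<in>I. Eg * (\<bar>E1 i\<bar> * \<bar>E1 k\<bar>)) = Eg * (\<Sum>i\<in>I. \<bar>E1 i\<bar>)\<^sup>2"
  proof -
    have "(\<Sum>i\<in>I. \<bar>E1 i\<bar>)\<^sup>2 = (\<Sum>i\<in>I. \<Sum>k\<in>I. \<bar>E1 i\<bar> * \<bar>E1 k\<bar>)"
      by (simp only: power2_eq_square sum_product)
    thus ?thesis by (simp add: sum_distrib_left)
  qed
  also have "(\<Sum>i\<in>I. Eg * E2 i) + Eg * (\<Sum>i\<in>I. \<bar>E1 i\<bar>)\<^sup>2 = Eg * ((\<Sum>i\<in>I. E2 i) + (\<Sum>i\<in>I. \<bar>E1 i\<bar>)\<^sup>2)"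
    by (simp add: sum_distrib_left distrib_left)
  finally show ?thesis by (simp add: Eg_def E1_def E2_def)
qed

end

lemma filterlim_plus1: "filterlim (\<lambda>x::real. x + 1) at_top at_top"
  using filterlim_tendsto_add_at_top[OF tendsto_const[of 1] filterlim_ident] by (simp add: add.commute)

locale hmain = hsetup +
  fixes \<alpha> c0p c0m :: real
  assumes alpha: "0 < \<alpha>" "\<alpha> < 2"
    and tail_pos: "((\<lambda>x. x powr \<alpha> * (1 - prob {\<omega> \<in> space M. X 1 \<omega> \<le> x})) \<longlongrightarrow> c0p) at_top"
    and tail_neg: "((\<lambda>x. \<bar>x\<bar> powr \<alpha> * prob {\<omega> \<in> space M. X 1 \<omega> \<le> x}) \<longlongrightarrow> c0m) at_bot"
begin

definition G :: "real \<Rightarrow> real" where "G t = prob {\<omega> \<in> space M. \<bar>X 1 \<omega>\<bar> > t}"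

lemma G_lim: "((\<lambda>t. t powr \<alpha> * G t) \<longlongrightarrow> c0p + c0m) at_top"
proof -
  define F where "F x = prob {\<omega> \<in> space M. X 1 \<omega> \<le> x}" for x
  define h where "h t = t powr \<alpha> * prob {\<omega> \<in> space M. X 1 \<omega> < - t}" for t
  have f: "((\<lambda>s. s powr \<alpha> * F (- s)) \<longlongrightarrow> c0m) at_top"
  proof -
    have "((\<lambda>s. \<bar>- s\<bar> powr \<alpha> * F (- s)) \<longlongrightarrow> c0m) at_top"
      using filterlim_compose[OF tail_neg[folded F_def] filterlim_uminus_at_bot_at_top] by simp
    moreover have "eventually (\<lambda>s. \<bar>- s\<bar> powr \<alpha> * F (- s) = s powr \<alpha> * F (- s)) at_top"
      using eventually_ge_at_top[of "0::real"] by eventually_elim simp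
    ultimately show ?thesis by (rule tendsto_cong[THEN iffD1, rotated])
  qed
  have hlim: "(h \<longlongrightarrow> c0m) at_top"
  proof (rule tendsto_sandwich)
    have "((\<lambda>t. (t / (t+1)) powr \<alpha> * ((t+1) powr \<alpha> * F (- (t+1)))) \<longlongrightarrow> 1 powr \<alpha> * c0m) at_top"
    proof (intro tendsto_intros)
      have "((\<lambda>t. 1 - inverse (t + 1)) \<longlongrightarrow> (1::real)) at_top"
        using tendsto_diff[OF tendsto_const[of 1] tendsto_inverse_0_at_top[OF filterlim_plus1]] by simp
      moreover have "eventually (\<lambda>t::real. 1 - inverse (t + 1) = t / (t + 1)) at_top"
        using eventually_gt_at_top[of "0::real"] by eventually_elim (simp add: field_simps)
      ultimately show "((\<lambda>t. t / (t + 1)) \<longlongrightarrow> (1::real)) at_top" by (rule tendsto_cong[THEN iffD1, rotated])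
      show "((\<lambda>t. (t + 1) powr \<alpha> * F (- (t + 1))) \<longlongrightarrow> c0m) at_top"
        using filterlim_compose[OF f filterlim_plus1] by simp
    qed (simp_all)
    thus "((\<lambda>t. (t / (t+1)) powr \<alpha> * ((t+1) powr \<alpha> * F (- (t+1)))) \<longlongrightarrow> c0m) at_top" by simp
    show "eventually (\<lambda>t. (t / (t+1)) powr \<alpha> * ((t+1) powr \<alpha> * F (- (t+1))) \<le> h t) at_top"
      using eventually_gt_at_top[of "0::real"]
    proof eventually_elim
      case (elim t)
      have "(t / (t+1)) powr \<alpha> * ((t+1) powr \<alpha> * F (- (t+1))) = t powr \<alpha> * F (- (t+1))"
        using elim by (simp add: powr_divide)
      also have "\<dots> \<le> h t" unfolding h_def F_def
        by (intro mult_left_mono finite_measure_mono) auto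
      finally show ?case .
    qed
    show "eventually (\<lambda>t. h t \<le> t powr \<alpha> * F (- t)) at_top"
      using eventually_gt_at_top[of "0::real"]
      by eventually_elim (auto simp: h_def F_def intro!: mult_left_mono finite_measure_mono)
  qed (use f in \<open>simp_all\<close>)
  have split: "t powr \<alpha> * G t = t powr \<alpha> * (1 - F t) + h t" if "t \<ge> 0" for t
  proof -
    have "{\<omega> \<in> space M. \<bar>X 1 \<omega>\<bar> > t} = (space M - {\<omega> \<in> space M. X 1 \<omega> \<le> t}) \<union> {\<omega> \<in> space M. X 1 \<omega> < - t}"
      using that by auto
    hence "G t = prob (space M - {\<omega> \<in> space M. X 1 \<omega> \<le> t}) + prob {\<omega> \<in> space M. X 1 \<omega> < - t}"
      unfolding G_def using that by (simp only:) (rule finite_measure_Union, auto)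
    also have "\<dots> = 1 - F t + prob {\<omega> \<in> space M. X 1 \<omega> < - t}"
      unfolding F_def by (subst prob_compl) auto
    finally have g: "G t = 1 - F t + prob {\<omega> \<in> space M. X 1 \<omega> < - t}" .
    show ?thesis unfolding g h_def by (simp add: algebra_simps)
  qed
  have "((\<lambda>t. t powr \<alpha> * (1 - F t) + h t) \<longlongrightarrow> c0p + c0m) at_top"
    by (intro tendsto_add hlim) (use tail_pos in \<open>simp add: F_def\<close>)
  moreover have "eventually (\<lambda>t. t powr \<alpha> * (1 - F t) + h t = t powr \<alpha> * G t) at_top"
    using eventually_ge_at_top[of "0::real"] by eventually_elim (simp add: split)
  ultimately show ?thesis by (rule tendsto_cong[THEN iffD1, rotated])
qed

end

context hmain
begin

lemma G_nonneg: "0 \<le> G t" by (simp add: G_def)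

lemma G_mono: "s \<le> t \<Longrightarrow> G t \<le> G s"
  unfolding G_def by (intro finite_measure_mono) auto

lemma G_bound: "\<exists>C t0. C > 0 \<and> t0 > 0 \<and> (\<forall>t\<ge>t0. G t \<le> C * t powr (-\<alpha>))"
proof -
  have "eventually (\<lambda>t. t powr \<alpha> * G t < c0p + c0m + 1) at_top"
    using G_lim by (rule order_tendstoD) simp
  then obtain t1 where t1: "\<And>t. t \<ge> t1 \<Longrightarrow> t powr \<alpha> * G t < c0p + c0m + 1"
    by (auto simp: eventually_at_top_linorder)
  define C where "C = max (c0p + c0m + 1) 1"
  have "\<forall>t\<ge>max t1 1. G t \<le> C * t powr (-\<alpha>)"
  proof (intro allI impI)
    fix t assume t: "t \<ge> max t1 1"
    have tp: "t > 0" using t by simp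
    have "G t = t powr (-\<alpha>) * (t powr \<alpha> * G t)" using tp by (simp add: powr_minus)
    also have "\<dots> \<le> t powr (-\<alpha>) * C"
      using t1[of t] t unfolding C_def by (intro mult_left_mono) auto
    finally show "G t \<le> C * t powr (-\<alpha>)" by (simp add: mult.commute)
  qed
  thus ?thesis by (intro exI[of _ C] exI[of _ "max t1 1"]) (auto simp: C_def)
qed

lemma int_ind: "(\<integral>\<omega>. (if c < \<bar>X 1 \<omega>\<bar> then 1 else 0) \<partial>M) = G c"
proof -
  have "(\<integral>\<omega>. (if c < \<bar>X 1 \<omega>\<bar> then 1 else 0) \<partial>M) = (\<integral>\<omega>. indicator {\<omega> \<in> space M. c < \<bar>X 1 \<omega>\<bar>} \<omega> \<partial>M)"
    by (rule Bochner_Integration.integral_cong) (auto simp: indicator_def)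
  also have "\<dots> = G c" by (simp add: G_def Int_absorb2)
  finally show ?thesis .
qed

lemma ind_integrable: "integrable M (\<lambda>\<omega>. b * (if c < \<bar>X 1 \<omega>\<bar> then 1 else 0::real))"
  by (rule bint[where B="\<bar>b\<bar>"]) auto

lemma int_lin:
  assumes "finite A"
  shows "(\<integral>\<omega>. a + (\<Sum>k\<in>A. b k * (if c k < \<bar>X 1 \<omega>\<bar> then 1 else 0)) \<partial>M) = a + (\<Sum>k\<in>A. b k * G (c k))"
proof -
  have "(\<integral>\<omega>. a + (\<Sum>k\<in>A. b k * (if c k < \<bar>X 1 \<omega>\<bar> then 1 else 0)) \<partial>M)
      = (\<integral>\<omega>. a \<partial>M) + (\<integral>\<omega>. (\<Sum>k\<in>A. b k * (if c k < \<bar>X 1 \<omega>\<bar> then 1 else 0)) \<partial>M)"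
    by (rule Bochner_Integration.integral_add[OF integrable_const Bochner_Integration.integrable_sum[OF ind_integrable]])
  also have "(\<integral>\<omega>. (\<Sum>k\<in>A. b k * (if c k < \<bar>X 1 \<omega>\<bar> then 1 else 0)) \<partial>M)
      = (\<Sum>k\<in>A. (\<integral>\<omega>. b k * (if c k < \<bar>X 1 \<omega>\<bar> then 1 else 0) \<partial>M))"
    by (rule Bochner_Integration.integral_sum) (rule ind_integrable)
  also have "\<dots> = (\<Sum>k\<in>A. b k * G (c k))"
  proof (rule sum.cong[OF refl])
    fix k
    have "(\<integral>\<omega>. b k * (if c k < \<bar>X 1 \<omega>\<bar> then 1 else 0) \<partial>M) = b k * (\<integral>\<omega>. (if c k < \<bar>X 1 \<omega>\<bar> then 1 else 0) \<partial>M)"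
      by (rule integral_mult_right_zero)
    also have "\<dots> = b k * G (c k)" by (simp only: int_ind)
    finally show "(\<integral>\<omega>. b k * (if c k < \<bar>X 1 \<omega>\<bar> then 1 else 0) \<partial>M) = b k * G (c k)" .
  qed
  finally show ?thesis by (simp add: prob_space)
qed

lemma trunc_moment:
  assumes p: "p > \<alpha>"
  shows "\<exists>K R0. R0 > 0 \<and> (\<forall>R\<ge>R0. (\<integral>\<omega>. (if \<bar>X 1 \<omega>\<bar> \<le> R then \<bar>X 1 \<omega>\<bar> powr p else 0) \<partial>M) \<le> K * R powr (p - \<alpha>))"
proof -
  obtain C t0 where C: "C > 0" "t0 > 0" "\<And>t. t \<ge> t0 \<Longrightarrow> G t \<le> C * t powr (-\<alpha>)"
    using G_bound by blast
  have p0: "p > 0" using p alpha by simp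
  define q where "q = 2 powr (\<alpha> - p)"
  have "2 powr (\<alpha> - p) < 2 powr 0" using p by (intro powr_less_mono) auto
  hence q: "0 < q" "q < 1" by (auto simp: q_def)
  define K where "K = (2*t0) powr p * t0 powr (\<alpha> - p) + C * 2 powr \<alpha> / (1 - q)"
  have main: "(\<integral>\<omega>. (if \<bar>X 1 \<omega>\<bar> \<le> R then \<bar>X 1 \<omega>\<bar> powr p else 0) \<partial>M) \<le> K * R powr (p - \<alpha>)"
    if R: "R \<ge> t0" for R
  proof -
    have R0: "R > 0" using R C by simp
    obtain N where N: "t0 * 2^N \<le> R" "R < t0 * 2^(Suc N)" using exN[OF C(2) R] by blast
    define f where "f \<omega> = (2*t0) powr p + (\<Sum>k<N. (R/2^k) powr p * (if \<bar>X 1 \<omega>\<bar> > R/2^(Suc k) then 1 else 0))" for \<omega>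
    have fi: "integrable M f"
    proof (rule bint[where B="(2*t0) powr p + (\<Sum>k<N. (R/2^k) powr p)"])
      fix \<omega>
      have "0 \<le> f \<omega>" unfolding f_def by (intro add_nonneg_nonneg sum_nonneg) auto
      moreover have "f \<omega> \<le> (2*t0) powr p + (\<Sum>k<N. (R/2^k) powr p)"
        unfolding f_def by (intro add_left_mono sum_mono) auto
      ultimately show "\<bar>f \<omega>\<bar> \<le> (2*t0) powr p + (\<Sum>k<N. (R/2^k) powr p)" by simp
    qed (unfold f_def, measurable)
    have li: "integrable M (\<lambda>\<omega>. (if \<bar>X 1 \<omega>\<bar> \<le> R then \<bar>X 1 \<omega>\<bar> powr p else 0))"
    proof (rule bint[where B="R powr p"])
      fix \<omega> show "\<bar>if \<bar>X 1 \<omega>\<bar> \<le> R then \<bar>X 1 \<omega>\<bar> powr p else 0\<bar> \<le> R powr p"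
        using p0 R0 by (auto intro: powr_mono2)
    qed simp
    have "(\<integral>\<omega>. (if \<bar>X 1 \<omega>\<bar> \<le> R then \<bar>X 1 \<omega>\<bar> powr p else 0) \<partial>M) \<le> (\<integral>\<omega>. f \<omega> \<partial>M)"
    proof (rule integral_mono[OF li fi])
      fix \<omega>
      show "(if \<bar>X 1 \<omega>\<bar> \<le> R then \<bar>X 1 \<omega>\<bar> powr p else 0) \<le> f \<omega>"
      proof (cases "\<bar>X 1 \<omega>\<bar> \<le> R")
        case True thus ?thesis using dyad_low[OF C(2) p0 N True] by (simp add: f_def)
      next
        case False
        have "0 \<le> f \<omega>" unfolding f_def by (intro add_nonneg_nonneg sum_nonneg) auto
        thus ?thesis using False by simp
      qed
    qed
    also have "(\<integral>\<omega>. f \<omega> \<partial>M) = (2*t0) powr p + (\<Sum>k<N. (R/2^k) powr p * G (R/2^(Suc k)))"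
      unfolding f_def by (rule int_lin) simp
    also have "\<dots> \<le> (2*t0) powr p + (\<Sum>k<N. C * 2 powr \<alpha> * R powr (p - \<alpha>) * q^k)"
    proof (intro add_left_mono sum_mono)
      fix k assume k: "k \<in> {..<N}"
      have "(2::real)^(Suc k) \<le> 2^N" using k by (intro power_increasing) auto
      hence "R/2^N \<le> R/2^(Suc k)" using R0 by (intro divide_left_mono) auto
      moreover have "t0 \<le> R/2^N" using N(1) by (simp add: field_simps)
      ultimately have "G (R/2^(Suc k)) \<le> C * (R/2^(Suc k)) powr (-\<alpha>)" by (intro C(3)) simp
      hence "(R/2^k) powr p * G (R/2^(Suc k)) \<le> (R/2^k) powr p * (C * (R/2^(Suc k)) powr (-\<alpha>))"
        by (intro mult_left_mono) auto
      also have "\<dots> = C * ((R/2^k) powr p * (R/2^(Suc k)) powr (-\<alpha>))" by simp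
      also have "\<dots> = C * 2 powr \<alpha> * R powr (p - \<alpha>) * q^k" unfolding pw1[OF R0] q_def by simp
      finally show "(R/2^k) powr p * G (R/2^(Suc k)) \<le> C * 2 powr \<alpha> * R powr (p - \<alpha>) * q^k" .
    qed
    also have "(\<Sum>k<N. C * 2 powr \<alpha> * R powr (p - \<alpha>) * q^k) = C * 2 powr \<alpha> * R powr (p - \<alpha>) * (\<Sum>k<N. q^k)"
      by (simp add: sum_distrib_left)
    also have "(\<Sum>k<N. q^k) \<le> 1 / (1 - q)"
    proof -
      have "(\<Sum>k<N. q^k) = (1 - q^N) / (1 - q)" using q by (simp add: sum_gp_strict)
      also have "\<dots> \<le> 1 / (1 - q)" using q by (intro divide_right_mono) auto
      finally show ?thesis .
    qed
    hence "C * 2 powr \<alpha> * R powr (p - \<alpha>) * (\<Sum>k<N. q^k) \<le> C * 2 powr \<alpha> * R powr (p - \<alpha>) * (1 / (1 - q))"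
      using C by (intro mult_left_mono) auto
    also have "(2*t0) powr p \<le> (2*t0) powr p * t0 powr (\<alpha> - p) * R powr (p - \<alpha>)"
    proof -
      have "t0 powr (\<alpha> - p) * R powr (p - \<alpha>) = (R / t0) powr (p - \<alpha>)"
      proof -
        have "t0 powr (\<alpha> - p) = inverse (t0 powr (p - \<alpha>))"
          using powr_minus[of t0 "p - \<alpha>"] by simp
        thus ?thesis using C R0 by (simp add: powr_divide field_simps)
      qed
      also have "\<dots> \<ge> 1" using R C p by (intro ge_one_powr_ge_zero) (auto simp: field_simps)
      finally have "1 \<le> t0 powr (\<alpha> - p) * R powr (p - \<alpha>)" .
      hence "(2*t0) powr p * 1 \<le> (2*t0) powr p * (t0 powr (\<alpha> - p) * R powr (p - \<alpha>))"
        by (intro mult_left_mono) auto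
      thus ?thesis by (simp add: mult_ac)
    qed
    ultimately show ?thesis unfolding K_def by (simp add: algebra_simps)
  qed
  show ?thesis using main C(2) by blast
qed

end

context hmain
begin

lemma abs_int_le:
  fixes h g :: "'a \<Rightarrow> real"
  assumes "integrable M h" "integrable M g" "\<And>\<omega>. \<omega> \<in> space M \<Longrightarrow> \<bar>h \<omega>\<bar> \<le> g \<omega>"
  shows "\<bar>\<integral>\<omega>. h \<omega> \<partial>M\<bar> \<le> (\<integral>\<omega>. g \<omega> \<partial>M)"
proof -
  have "(\<integral>\<omega>. h \<omega> \<partial>M) \<le> (\<integral>\<omega>. g \<omega> \<partial>M)"
    using assms by (intro integral_mono) (auto simp: abs_le_iff)
  moreover have "(\<integral>\<omega>. - g \<omega> \<partial>M) \<le> (\<integral>\<omega>. h \<omega> \<partial>M)"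
  proof (rule integral_mono)
    fix \<omega> assume "\<omega> \<in> space M"
    from assms(3)[OF this] show "- g \<omega> \<le> h \<omega>" by linarith
  qed (use assms in auto)
  ultimately show ?thesis by (simp add: abs_le_iff)
qed

definition M1 :: "real \<Rightarrow> real" where "M1 R = (\<integral>\<omega>. (if \<bar>X 1 \<omega>\<bar> \<le> R then X 1 \<omega> else 0) \<partial>M)"
definition M2 :: "real \<Rightarrow> real" where "M2 R = (\<integral>\<omega>. (if \<bar>X 1 \<omega>\<bar> \<le> R then (X 1 \<omega>)\<^sup>2 else 0) \<partial>M)"

lemma M2_bound: "\<exists>K R0. R0 > 0 \<and> (\<forall>R\<ge>R0. M2 R \<le> K * R powr (2 - \<alpha>))"
proof -
  obtain K R0 where KR: "R0 > 0" "\<And>R. R \<ge> R0 \<Longrightarrow>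
      (\<integral>\<omega>. (if \<bar>X 1 \<omega>\<bar> \<le> R then \<bar>X 1 \<omega>\<bar> powr 2 else 0) \<partial>M) \<le> K * R powr (2 - \<alpha>)"
    using trunc_moment[of 2] alpha by auto
  have "M2 R = (\<integral>\<omega>. (if \<bar>X 1 \<omega>\<bar> \<le> R then \<bar>X 1 \<omega>\<bar> powr 2 else 0) \<partial>M)" for R
    unfolding M2_def by (rule Bochner_Integration.integral_cong) auto
  thus ?thesis using KR by metis
qed

lemma M1_lt1:
  assumes "\<alpha> < 1"
  shows "\<exists>K R0. R0 > 0 \<and> (\<forall>R\<ge>R0. \<bar>M1 R\<bar> \<le> K * R powr (1 - \<alpha>))"
proof -
  obtain K R0 where KR: "R0 > 0" "\<And>R. R \<ge> R0 \<Longrightarrow>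
      (\<integral>\<omega>. (if \<bar>X 1 \<omega>\<bar> \<le> R then \<bar>X 1 \<omega>\<bar> powr 1 else 0) \<partial>M) \<le> K * R powr (1 - \<alpha>)"
    using trunc_moment[of 1] assms by auto
  have "\<bar>M1 R\<bar> \<le> K * R powr (1 - \<alpha>)" if R: "R \<ge> R0" for R
  proof -
    have "\<bar>M1 R\<bar> \<le> (\<integral>\<omega>. (if \<bar>X 1 \<omega>\<bar> \<le> R then \<bar>X 1 \<omega>\<bar> powr 1 else 0) \<partial>M)"
      unfolding M1_def
    proof (rule abs_int_le)
      show "integrable M (\<lambda>\<omega>. if \<bar>X 1 \<omega>\<bar> \<le> R then X 1 \<omega> else 0)"
        by (rule bint[where B="\<bar>R\<bar>"]) auto
      show "integrable M (\<lambda>\<omega>. if \<bar>X 1 \<omega>\<bar> \<le> R then \<bar>X 1 \<omega>\<bar> powr 1 else 0)"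
        by (rule bint[where B="\<bar>R\<bar>"]) auto
    qed auto
    also have "\<dots> \<le> K * R powr (1 - \<alpha>)" using KR R by simp
    finally show ?thesis .
  qed
  thus ?thesis using KR by blast
qed

lemma up_tail_fin:
  assumes a: "\<alpha> > 1"
  shows "\<exists>K R0. R0 > 0 \<and> (\<forall>R\<ge>R0. \<forall>N. (\<integral>\<omega>. (if R < \<bar>X 1 \<omega>\<bar> \<and> \<bar>X 1 \<omega>\<bar> \<le> R*2^N then \<bar>X 1 \<omega>\<bar> else 0) \<partial>M) \<le> K * R powr (1 - \<alpha>))"
proof -
  obtain C t0 where C: "C > 0" "t0 > 0" "\<And>t. t \<ge> t0 \<Longrightarrow> G t \<le> C * t powr (-\<alpha>)"
    using G_bound by blast
  define q where "q = 2 powr (1 - \<alpha>)"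
  have "2 powr (1 - \<alpha>) < 2 powr 0" using a by (intro powr_less_mono) auto
  hence q: "0 < q" "q < 1" by (auto simp: q_def)
  define K where "K = 2 * C / (1 - q)"
  have main: "(\<integral>\<omega>. (if R < \<bar>X 1 \<omega>\<bar> \<and> \<bar>X 1 \<omega>\<bar> \<le> R*2^N then \<bar>X 1 \<omega>\<bar> else 0) \<partial>M) \<le> K * R powr (1 - \<alpha>)"
    if R: "R \<ge> t0" for R N
  proof -
    have R0: "R > 0" using R C by simp
    define f where "f \<omega> = 0 + (\<Sum>k<N. R*2^(Suc k) * (if R*2^k < \<bar>X 1 \<omega>\<bar> then 1 else 0))" for \<omega>
    have fi: "integrable M f"
    proof (rule bint[where B="(\<Sum>k<N. R*2^(Suc k))"])
      fix \<omega>
      have "0 \<le> f \<omega>" unfolding f_def using R0 by (intro add_nonneg_nonneg sum_nonneg) auto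
      moreover have "f \<omega> \<le> (\<Sum>k<N. R*2^(Suc k))"
        unfolding f_def using R0 by (simp, intro sum_mono) auto
      ultimately show "\<bar>f \<omega>\<bar> \<le> (\<Sum>k<N. R*2^(Suc k))" by simp
    qed (unfold f_def, measurable)
    have li: "integrable M (\<lambda>\<omega>. (if R < \<bar>X 1 \<omega>\<bar> \<and> \<bar>X 1 \<omega>\<bar> \<le> R*2^N then \<bar>X 1 \<omega>\<bar> else 0))"
      by (rule bint[where B="\<bar>R*2^N\<bar>"]) auto
    have "(\<integral>\<omega>. (if R < \<bar>X 1 \<omega>\<bar> \<and> \<bar>X 1 \<omega>\<bar> \<le> R*2^N then \<bar>X 1 \<omega>\<bar> else 0) \<partial>M) \<le> (\<integral>\<omega>. f \<omega> \<partial>M)"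
    proof (rule integral_mono[OF li fi])
      fix \<omega>
      show "(if R < \<bar>X 1 \<omega>\<bar> \<and> \<bar>X 1 \<omega>\<bar> \<le> R*2^N then \<bar>X 1 \<omega>\<bar> else 0) \<le> f \<omega>"
        using dyad_up[OF R0, of "X 1 \<omega>" N] by (simp only: f_def add_0_left)
    qed
    also have "(\<integral>\<omega>. f \<omega> \<partial>M) = 0 + (\<Sum>k<N. R*2^(Suc k) * G (R*2^k))"
      unfolding f_def by (rule int_lin) simp
    also have "\<dots> \<le> 0 + (\<Sum>k<N. C * 2 * R powr (1 - \<alpha>) * q^k)"
    proof (intro add_left_mono sum_mono)
      fix k assume k: "k \<in> {..<N}"
      have "R \<le> R*2^k" using R0 by simp
      hence "G (R*2^k) \<le> C * (R*2^k) powr (-\<alpha>)" using R by (intro C(3)) simp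
      hence "R*2^(Suc k) * G (R*2^k) \<le> R*2^(Suc k) * (C * (R*2^k) powr (-\<alpha>))"
        using R0 by (intro mult_left_mono) auto
      also have "\<dots> = C * (R*2^(Suc k) * (R*2^k) powr (-\<alpha>))" by simp
      also have "\<dots> = C * 2 * R powr (1 - \<alpha>) * q^k" unfolding pw2[OF R0] q_def by simp
      finally show "R*2^(Suc k) * G (R*2^k) \<le> C * 2 * R powr (1 - \<alpha>) * q^k" .
    qed
    also have "(\<Sum>k<N. C * 2 * R powr (1 - \<alpha>) * q^k) = C * 2 * R powr (1 - \<alpha>) * (\<Sum>k<N. q^k)"
      by (simp add: sum_distrib_left)
    also have "(\<Sum>k<N. q^k) \<le> 1 / (1 - q)"
    proof -
      have "(\<Sum>k<N. q^k) = (1 - q^N) / (1 - q)" using q by (simp add: sum_gp_strict)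
      also have "\<dots> \<le> 1 / (1 - q)" using q by (intro divide_right_mono) auto
      finally show ?thesis .
    qed
    hence "C * 2 * R powr (1 - \<alpha>) * (\<Sum>k<N. q^k) \<le> C * 2 * R powr (1 - \<alpha>) * (1 / (1 - q))"
      using C by (intro mult_left_mono) auto
    finally show ?thesis unfolding K_def by (simp add: algebra_simps)
  qed
  show ?thesis by (intro exI[of _ K] exI[of _ t0] conjI C(2) allI impI main)
qed

lemma M1_gt1:
  assumes a: "\<alpha> > 1" and int: "integrable M (X 1)" and e0: "(\<integral>\<omega>. X 1 \<omega> \<partial>M) = 0"
  shows "\<exists>K R0. R0 > 0 \<and> (\<forall>R\<ge>R0. \<bar>M1 R\<bar> \<le> K * R powr (1 - \<alpha>))"
proof -
  obtain K R0 where KR: "R0 > 0" "\<And>R N. R \<ge> R0 \<Longrightarrow>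
     (\<integral>\<omega>. (if R < \<bar>X 1 \<omega>\<bar> \<and> \<bar>X 1 \<omega>\<bar> \<le> R*2^N then \<bar>X 1 \<omega>\<bar> else 0) \<partial>M) \<le> K * R powr (1 - \<alpha>)"
    using up_tail_fin[OF a] by blast
  have "\<bar>M1 R\<bar> \<le> K * R powr (1 - \<alpha>)" if R: "R \<ge> R0" for R
  proof -
    have R0: "R > 0" using R KR by simp
    define s where "s N \<omega> = (if R < \<bar>X 1 \<omega>\<bar> \<and> \<bar>X 1 \<omega>\<bar> \<le> R*2^N then \<bar>X 1 \<omega>\<bar> else 0)" for N \<omega>
    define t where "t \<omega> = (if R < \<bar>X 1 \<omega>\<bar> then \<bar>X 1 \<omega>\<bar> else 0)" for \<omega>
    have lim: "(\<lambda>N. \<integral>\<omega>. s N \<omega> \<partial>M) \<longlonglongrightarrow> (\<integral>\<omega>. t \<omega> \<partial>M)"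
    proof (rule integral_dominated_convergence[where w="\<lambda>\<omega>. \<bar>X 1 \<omega>\<bar>"])
      show "t \<in> borel_measurable M" unfolding t_def by measurable
      show "s N \<in> borel_measurable M" for N unfolding s_def by measurable
      show "integrable M (\<lambda>\<omega>. \<bar>X 1 \<omega>\<bar>)" using int by simp
      show "AE \<omega> in M. norm (s N \<omega>) \<le> \<bar>X 1 \<omega>\<bar>" for N by (auto simp: s_def)
      show "AE \<omega> in M. (\<lambda>N. s N \<omega>) \<longlonglongrightarrow> t \<omega>"
      proof (rule AE_I2)
        fix \<omega>
        obtain n where n: "\<bar>X 1 \<omega>\<bar> / R < 2^n" using real_arch_pow[of 2 "\<bar>X 1 \<omega>\<bar> / R"] by auto
        have "eventually (\<lambda>N. s N \<omega> = t \<omega>) sequentially"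
          unfolding eventually_sequentially
        proof (intro exI allI impI)
          fix N assume N: "N \<ge> n"
          have "(2::real)^n \<le> 2^N" using N by (intro power_increasing) auto
          hence "R * 2^n \<le> R * 2^N" using R0 by simp
          moreover have "\<bar>X 1 \<omega>\<bar> < R * 2^n" using n R0 by (simp add: field_simps)
          ultimately have "\<bar>X 1 \<omega>\<bar> \<le> R * 2^N" by linarith
          thus "s N \<omega> = t \<omega>" by (simp add: s_def t_def)
        qed
        thus "(\<lambda>N. s N \<omega>) \<longlonglongrightarrow> t \<omega>" by (rule tendsto_eventually)
      qed
    qed
    have tb: "(\<integral>\<omega>. t \<omega> \<partial>M) \<le> K * R powr (1 - \<alpha>)"
    proof (rule tendsto_le[OF sequentially_bot tendsto_const lim])
      have sb: "(\<integral>\<omega>. s N \<omega> \<partial>M) \<le> K * R powr (1 - \<alpha>)" for N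
        unfolding s_def by (rule KR(2)[OF R])
      show "eventually (\<lambda>N. (\<integral>\<omega>. s N \<omega> \<partial>M) \<le> K * R powr (1 - \<alpha>)) sequentially"
        by (rule always_eventually) (simp add: sb)
    qed
    have ti: "integrable M t"
    proof -
      have ai: "integrable M (\<lambda>\<omega>. \<bar>X 1 \<omega>\<bar>)" using int by simp
      show ?thesis unfolding t_def by (rule Bochner_Integration.integrable_bound[OF ai]) auto
    qed
    define u where "u \<omega> = (if R < \<bar>X 1 \<omega>\<bar> then X 1 \<omega> else 0)" for \<omega>
    have ui: "integrable M u"
      unfolding u_def by (rule Bochner_Integration.integrable_bound[OF int]) auto
    have vi: "integrable M (\<lambda>\<omega>. if \<bar>X 1 \<omega>\<bar> \<le> R then X 1 \<omega> else 0)"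
      by (rule bint[where B="\<bar>R\<bar>"]) auto
    have "(\<integral>\<omega>. X 1 \<omega> \<partial>M) = (\<integral>\<omega>. (if \<bar>X 1 \<omega>\<bar> \<le> R then X 1 \<omega> else 0) + u \<omega> \<partial>M)"
      by (rule Bochner_Integration.integral_cong) (auto simp: u_def)
    also have "\<dots> = M1 R + (\<integral>\<omega>. u \<omega> \<partial>M)"
      unfolding M1_def by (rule Bochner_Integration.integral_add[OF vi ui])
    finally have "M1 R = - (\<integral>\<omega>. u \<omega> \<partial>M)" using e0 by simp
    hence "\<bar>M1 R\<bar> = \<bar>\<integral>\<omega>. u \<omega> \<partial>M\<bar>" by simp
    also have "\<dots> \<le> (\<integral>\<omega>. t \<omega> \<partial>M)"
      by (rule abs_int_le[OF ui ti]) (auto simp: u_def t_def)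
    finally show ?thesis using tb by simp
  qed
  thus ?thesis using KR by blast
qed

end

context hmain
begin

lemma M1_eq1:
  assumes a: "\<alpha> = 1"
    and lim: "((\<lambda>R. LINT x:{-R<..<R}|distr M borel (X 1). x) \<longlongrightarrow> \<gamma>0) at_top"
  shows "\<exists>K R0. R0 > 0 \<and> (\<forall>R\<ge>R0. \<bar>M1 R\<bar> \<le> K * R powr (1 - \<alpha>))"
proof -
  define L where "L R = (\<integral>\<omega>. (if \<bar>X 1 \<omega>\<bar> < R then X 1 \<omega> else 0) \<partial>M)" for R
  have LL: "(LINT x:{-R<..<R}|distr M borel (X 1). x) = L R" for R
  proof -
    have "(LINT x:{-R<..<R}|distr M borel (X 1). x) = (\<integral>x. indicator {-R<..<R} x *\<^sub>R x \<partial>distr M borel (X 1))"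
      by (simp add: set_lebesgue_integral_def)
    also have "\<dots> = (\<integral>\<omega>. indicator {-R<..<R} (X 1 \<omega>) *\<^sub>R X 1 \<omega> \<partial>M)"
      by (rule integral_distr) auto
    also have "\<dots> = L R" unfolding L_def
      by (rule Bochner_Integration.integral_cong) (auto simp: indicator_def abs_less_iff)
    finally show ?thesis .
  qed
  have "eventually (\<lambda>R. dist (L R) \<gamma>0 < 1) at_top"
    using lim unfolding LL by (rule tendstoD) simp
  then obtain R1 where R1: "\<And>R. R \<ge> R1 \<Longrightarrow> \<bar>L R - \<gamma>0\<bar> < 1"
    by (auto simp: eventually_at_top_linorder dist_real_def)
  obtain C t0 where C: "C > 0" "t0 > 0" "\<And>t. t \<ge> t0 \<Longrightarrow> G t \<le> C * t powr (-\<alpha>)"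
    using G_bound by blast
  define K where "K = \<bar>\<gamma>0\<bar> + 1 + 2 * C"
  have "\<bar>M1 R\<bar> \<le> K * R powr (1 - \<alpha>)" if R: "R \<ge> max R1 (2 * t0)" for R
  proof -
    have R0: "R > 0" using R C by simp
    have i1: "integrable M (\<lambda>\<omega>. if \<bar>X 1 \<omega>\<bar> \<le> R then X 1 \<omega> else 0)"
      by (rule bint[where B="\<bar>R\<bar>"]) auto
    have i2: "integrable M (\<lambda>\<omega>. if \<bar>X 1 \<omega>\<bar> < R then X 1 \<omega> else 0)"
      by (rule bint[where B="\<bar>R\<bar>"]) auto
    have "M1 R - L R = (\<integral>\<omega>. (if \<bar>X 1 \<omega>\<bar> \<le> R then X 1 \<omega> else 0) - (if \<bar>X 1 \<omega>\<bar> < R then X 1 \<omega> else 0) \<partial>M)"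
      unfolding M1_def L_def by (rule Bochner_Integration.integral_diff[OF i1 i2, symmetric])
    also have "\<bar>\<dots>\<bar> \<le> (\<integral>\<omega>. R * (if R/2 < \<bar>X 1 \<omega>\<bar> then 1 else 0) \<partial>M)"
    proof (rule abs_int_le)
      show "integrable M (\<lambda>\<omega>. (if \<bar>X 1 \<omega>\<bar> \<le> R then X 1 \<omega> else 0) - (if \<bar>X 1 \<omega>\<bar> < R then X 1 \<omega> else 0))"
        using i1 i2 by simp
      show "integrable M (\<lambda>\<omega>. R * (if R/2 < \<bar>X 1 \<omega>\<bar> then 1 else 0))" by (rule ind_integrable)
      fix \<omega>
      show "\<bar>(if \<bar>X 1 \<omega>\<bar> \<le> R then X 1 \<omega> else 0) - (if \<bar>X 1 \<omega>\<bar> < R then X 1 \<omega> else 0)\<bar>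
            \<le> R * (if R/2 < \<bar>X 1 \<omega>\<bar> then 1 else 0)"
        using R0 by auto
    qed
    also have "(\<integral>\<omega>. R * (if R/2 < \<bar>X 1 \<omega>\<bar> then 1 else 0) \<partial>M) = R * G (R/2)"
      by (simp only: integral_mult_right_zero int_ind)
    also have "\<dots> \<le> R * (C * (R/2) powr (-\<alpha>))"
      using R R0 by (intro mult_left_mono C(3)) auto
    also have "\<dots> = 2 * C" using R0 a by (simp add: powr_minus field_simps)
    finally have d: "\<bar>M1 R - L R\<bar> \<le> 2 * C" .
    have "\<bar>L R\<bar> \<le> \<bar>\<gamma>0\<bar> + 1" using R1[of R] R by linarith
    hence "\<bar>M1 R\<bar> \<le> K" using d unfolding K_def by linarith
    thus ?thesis using a R0 by simp
  qed
  moreover have "max R1 (2 * t0) > 0" using C by simp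
  ultimately show ?thesis by blast
qed

lemma M1_bound:
  assumes a1: "\<alpha> = 1 \<Longrightarrow> ((\<lambda>R. LINT x:{-R<..<R}|distr M borel (X 1). x) \<longlongrightarrow> \<gamma>0) at_top"
    and a2: "\<alpha> > 1 \<Longrightarrow> integrable M (X 1) \<and> (\<integral>\<omega>. X 1 \<omega> \<partial>M) = 0"
  shows "\<exists>K R0. R0 > 0 \<and> (\<forall>R\<ge>R0. \<bar>M1 R\<bar> \<le> K * R powr (1 - \<alpha>))"
proof (cases "\<alpha> < 1")
  case True thus ?thesis by (rule M1_lt1)
next
  case False
  show ?thesis
  proof (cases "\<alpha> = 1")
    case True thus ?thesis using M1_eq1 a1 by blast
  next
    case False
    hence "\<alpha> > 1" using \<open>\<not> \<alpha> < 1\<close> by simp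
    thus ?thesis using M1_gt1 a2 by blast
  qed
qed

end

definition yf :: "real \<Rightarrow> real \<Rightarrow> real \<Rightarrow> real" where
  "yf c T y = (if \<bar>c * y\<bar> \<le> T then c * y else 0)"
definition jf :: "real \<Rightarrow> real \<Rightarrow> real \<Rightarrow> real" where
  "jf c T y = (if T < \<bar>c * y\<bar> then 1 else 0)"

lemma jf_nonneg: "0 \<le> jf c T y" by (simp add: jf_def)
lemma jf_le1: "jf c T y \<le> 1" by (simp add: jf_def)

lemma markov_pw:
  fixes x s :: real
  assumes "x > 0"
  shows "(if x \<le> \<bar>s\<bar> then 1 else 0) \<le> s\<^sup>2 / x\<^sup>2"
proof (cases "x \<le> \<bar>s\<bar>")
  case True
  hence "x\<^sup>2 \<le> s\<^sup>2" using assms by (metis abs_ge_zero less_le power2_abs power_mono)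
  thus ?thesis using True assms by simp
qed simp

lemma dd_nonneg: "0 \<le> (\<Sum>j\<in>I. \<Sum>k\<in>I-{j}. jf (b j) T (u j) * jf (b k) T (u k))"
  by (intro sum_nonneg mult_nonneg_nonneg jf_nonneg)

lemma pw_upper:
  fixes u b :: "nat \<Rightarrow> real" and x \<epsilon> T :: real
  assumes fin: "finite I" and x: "x > 0" and e: "0 < \<epsilon>" "\<epsilon> < 1"
  shows "(if x < \<bar>\<Sum>i\<in>I. b i * u i\<bar> then 1 else 0)
    \<le> (\<Sum>i\<in>I. yf (b i) T (u i))\<^sup>2 / x\<^sup>2
     + (\<Sum>j\<in>I. \<Sum>k\<in>I-{j}. jf (b j) T (u j) * jf (b k) T (u k))
     + (\<Sum>j\<in>I. jf (b j) ((1-\<epsilon>)*x) (u j))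
     + (\<Sum>j\<in>I. jf (b j) T (u j) * ((\<Sum>i\<in>I-{j}. yf (b i) T (u i))\<^sup>2 / (\<epsilon>*x)\<^sup>2))"
    (is "?L \<le> ?Z + ?D + ?A + ?W")
proof -
  have Z0: "0 \<le> ?Z" by simp
  have D0: "0 \<le> ?D" by (rule dd_nonneg)
  have A0: "0 \<le> ?A" by (intro sum_nonneg jf_nonneg)
  have W0: "0 \<le> ?W" by (intro sum_nonneg mult_nonneg_nonneg jf_nonneg) simp
  show ?thesis
  proof (cases "x < \<bar>\<Sum>i\<in>I. b i * u i\<bar>")
    case False thus ?thesis using Z0 D0 A0 W0 by simp
  next
    case big: True
    show ?thesis
    proof (cases "\<exists>j\<in>I. T < \<bar>b j * u j\<bar>")
      case False
      hence "(\<Sum>i\<in>I. yf (b i) T (u i)) = (\<Sum>i\<in>I. b i * u i)"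
        by (intro sum.cong) (auto simp: yf_def)
      hence "1 \<le> ?Z" using markov_pw[OF x, of "\<Sum>i\<in>I. b i * u i"] big by simp
      thus ?thesis using big D0 A0 W0 by (simp only: if_P[OF big] if_True; linarith)
    next
      case True
      then obtain j where j: "j \<in> I" "T < \<bar>b j * u j\<bar>" by blast
      show ?thesis
      proof (cases "\<exists>k\<in>I-{j}. T < \<bar>b k * u k\<bar>")
        case True
        then obtain k where k: "k \<in> I-{j}" "T < \<bar>b k * u k\<bar>" by blast
        have "1 = jf (b j) T (u j) * jf (b k) T (u k)" using j k by (simp add: jf_def)
        also have "\<dots> \<le> (\<Sum>k\<in>I-{j}. jf (b j) T (u j) * jf (b k) T (u k))"
          by (rule member_le_sum) (use k fin in \<open>auto intro: mult_nonneg_nonneg jf_nonneg\<close>)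
        also have "\<dots> \<le> ?D"
          by (rule member_le_sum) (use j fin in \<open>auto intro!: sum_nonneg mult_nonneg_nonneg jf_nonneg\<close>)
        finally show ?thesis using big Z0 A0 W0 by (simp only: if_P[OF big] if_True; linarith)
      next
        case False
        have Rj: "(\<Sum>i\<in>I-{j}. yf (b i) T (u i)) = (\<Sum>i\<in>I-{j}. b i * u i)"
        proof (rule sum.cong[OF refl])
          fix i assume "i \<in> I-{j}"
          hence "\<not> T < \<bar>b i * u i\<bar>" using False by blast
          thus "yf (b i) T (u i) = b i * u i" by (simp add: yf_def)
        qed
        have S: "(\<Sum>i\<in>I. b i * u i) = b j * u j + (\<Sum>i\<in>I-{j}. b i * u i)"
          using j fin by (simp add: sum.remove)
        show ?thesis
        proof (cases "(1-\<epsilon>)*x < \<bar>b j * u j\<bar>")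
          case True
          have "1 = jf (b j) ((1-\<epsilon>)*x) (u j)" using True by (simp add: jf_def)
          also have "\<dots> \<le> ?A" by (rule member_le_sum) (use j fin in \<open>auto intro: jf_nonneg\<close>)
          finally show ?thesis using big Z0 D0 W0 by (simp only: if_P[OF big] if_True; linarith)
        next
          case False
          have "(1-\<epsilon>)*x = x - \<epsilon>*x" by (simp add: algebra_simps)
          hence "\<epsilon>*x \<le> \<bar>\<Sum>i\<in>I-{j}. b i * u i\<bar>"
            using big False S abs_triangle_ineq[of "b j * u j" "\<Sum>i\<in>I-{j}. b i * u i"] by linarith
          hence "1 \<le> (\<Sum>i\<in>I-{j}. yf (b i) T (u i))\<^sup>2 / (\<epsilon>*x)\<^sup>2"
            using markov_pw[of "\<epsilon>*x" "\<Sum>i\<in>I-{j}. yf (b i) T (u i)"] x e Rj by simp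
          hence "1 \<le> jf (b j) T (u j) * ((\<Sum>i\<in>I-{j}. yf (b i) T (u i))\<^sup>2 / (\<epsilon>*x)\<^sup>2)"
            using j by (simp add: jf_def)
          also have "\<dots> \<le> ?W"
            by (rule member_le_sum) (use j fin in \<open>auto intro!: mult_nonneg_nonneg jf_nonneg divide_nonneg_nonneg\<close>)
          finally show ?thesis using big Z0 D0 A0 by (simp only: if_P[OF big] if_True; linarith)
        qed
      qed
    qed
  qed
qed

lemma pw_lower:
  fixes u b :: "nat \<Rightarrow> real" and x \<epsilon> T :: real
  assumes fin: "finite I" and x: "x > 0" and e: "0 < \<epsilon>" and T: "T \<le> (1+\<epsilon>)*x"
  shows "(\<Sum>j\<in>I. jf (b j) ((1+\<epsilon>)*x) (u j))
     - (\<Sum>j\<in>I. \<Sum>k\<in>I-{j}. jf (b j) T (u j) * jf (b k) T (u k))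
     - (\<Sum>j\<in>I. jf (b j) T (u j) * ((\<Sum>i\<in>I-{j}. yf (b i) T (u i))\<^sup>2 / (\<epsilon>*x)\<^sup>2))
     \<le> (if x < \<bar>\<Sum>i\<in>I. b i * u i\<bar> then 1 else 0)"
proof -
  define Ev where "Ev j = ((1+\<epsilon>)*x < \<bar>b j * u j\<bar> \<and> (\<forall>k\<in>I-{j}. \<not> T < \<bar>b k * u k\<bar>)
      \<and> \<bar>\<Sum>i\<in>I-{j}. yf (b i) T (u i)\<bar> < \<epsilon>*x)" for j
  define tm where "tm j = jf (b j) ((1+\<epsilon>)*x) (u j) - (\<Sum>k\<in>I-{j}. jf (b j) T (u j) * jf (b k) T (u k))
     - jf (b j) T (u j) * ((\<Sum>i\<in>I-{j}. yf (b i) T (u i))\<^sup>2 / (\<epsilon>*x)\<^sup>2)" for j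
  have tmE: "tm j \<le> (if Ev j then 1 else 0)" if jI: "j \<in> I" for j
  proof -
    have p1: "0 \<le> (\<Sum>k\<in>I-{j}. jf (b j) T (u j) * jf (b k) T (u k))"
      by (intro sum_nonneg mult_nonneg_nonneg jf_nonneg)
    have p2: "0 \<le> jf (b j) T (u j) * ((\<Sum>i\<in>I-{j}. yf (b i) T (u i))\<^sup>2 / (\<epsilon>*x)\<^sup>2)"
      by (intro mult_nonneg_nonneg jf_nonneg) simp
    show ?thesis
    proof (cases "(1+\<epsilon>)*x < \<bar>b j * u j\<bar>")
      case False
      hence "jf (b j) ((1+\<epsilon>)*x) (u j) = 0" by (simp add: jf_def)
      hence "tm j \<le> 0" using p1 p2 unfolding tm_def by linarith
      thus ?thesis by simp
    next
      case A: True
      have Jj: "jf (b j) T (u j) = 1" using A T by (simp add: jf_def)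
      show ?thesis
      proof (cases "\<exists>k\<in>I-{j}. T < \<bar>b k * u k\<bar>")
        case True
        then obtain k where k: "k \<in> I-{j}" "T < \<bar>b k * u k\<bar>" by blast
        have "1 = jf (b j) T (u j) * jf (b k) T (u k)" using Jj k by (simp add: jf_def)
        also have "\<dots> \<le> (\<Sum>k\<in>I-{j}. jf (b j) T (u j) * jf (b k) T (u k))"
          by (rule member_le_sum) (use k fin in \<open>auto intro: mult_nonneg_nonneg jf_nonneg\<close>)
        finally have "tm j \<le> 0" using p2 jf_le1[of "b j" "(1+\<epsilon>)*x" "u j"] by (simp add: tm_def)
        thus ?thesis by simp
      next
        case nk: False
        show ?thesis
        proof (cases "\<bar>\<Sum>i\<in>I-{j}. yf (b i) T (u i)\<bar> < \<epsilon>*x")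
          case True
          hence "Ev j" using A nk by (simp add: Ev_def)
          moreover have "tm j \<le> 1" using p1 p2 jf_le1[of "b j" "(1+\<epsilon>)*x" "u j"] by (simp add: tm_def)
          ultimately show ?thesis by simp
        next
          case False
          hence "1 \<le> (\<Sum>i\<in>I-{j}. yf (b i) T (u i))\<^sup>2 / (\<epsilon>*x)\<^sup>2"
            using markov_pw[of "\<epsilon>*x" "\<Sum>i\<in>I-{j}. yf (b i) T (u i)"] x e by simp
          hence "tm j \<le> 0" using p1 Jj jf_le1[of "b j" "(1+\<epsilon>)*x" "u j"] by (simp add: tm_def)
          thus ?thesis by simp
        qed
      qed
    qed
  qed
  have sumE: "(\<Sum>j\<in>I. (if Ev j then 1 else 0::real)) \<le> (if x < \<bar>\<Sum>i\<in>I. b i * u i\<bar> then 1 else 0)"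
  proof (cases "\<exists>j\<in>I. Ev j")
    case False
    hence "(\<Sum>j\<in>I. (if Ev j then 1 else 0::real)) = 0" by (intro sum.neutral) auto
    thus ?thesis by simp
  next
    case True
    then obtain j where j: "j \<in> I" "Ev j" by blast
    have other: "\<not> Ev k" if "k \<in> I" "k \<noteq> j" for k
    proof
      assume "Ev k"
      hence "\<not> T < \<bar>b j * u j\<bar>" using j that unfolding Ev_def by auto
      moreover have "(1+\<epsilon>)*x < \<bar>b j * u j\<bar>" using j unfolding Ev_def by auto
      ultimately show False using T by linarith
    qed
    have "(\<Sum>j\<in>I. (if Ev j then 1 else 0::real)) = (if Ev j then 1 else 0) + (\<Sum>k\<in>I-{j}. (if Ev k then 1 else 0))"
      using j fin by (simp add: sum.remove)
    also have "(\<Sum>k\<in>I-{j}. (if Ev k then 1 else 0::real)) = 0"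
      using other by (intro sum.neutral) auto
    finally have s1: "(\<Sum>j\<in>I. (if Ev j then 1 else 0::real)) = 1" using j by simp
    have Rj: "(\<Sum>i\<in>I-{j}. yf (b i) T (u i)) = (\<Sum>i\<in>I-{j}. b i * u i)"
    proof (rule sum.cong[OF refl])
      fix i assume "i \<in> I-{j}"
      hence "\<not> T < \<bar>b i * u i\<bar>" using j unfolding Ev_def by blast
      thus "yf (b i) T (u i) = b i * u i" by (simp add: yf_def)
    qed
    have S: "(\<Sum>i\<in>I. b i * u i) = b j * u j + (\<Sum>i\<in>I-{j}. b i * u i)"
      using j fin by (simp add: sum.remove)
    have "x < \<bar>\<Sum>i\<in>I. b i * u i\<bar>" using j Rj S unfolding Ev_def by (simp add: algebra_simps) linarith
    thus ?thesis using s1 by simp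
  qed
  have "(\<Sum>j\<in>I. jf (b j) ((1+\<epsilon>)*x) (u j))
     - (\<Sum>j\<in>I. \<Sum>k\<in>I-{j}. jf (b j) T (u j) * jf (b k) T (u k))
     - (\<Sum>j\<in>I. jf (b j) T (u j) * ((\<Sum>i\<in>I-{j}. yf (b i) T (u i))\<^sup>2 / (\<epsilon>*x)\<^sup>2)) = (\<Sum>j\<in>I. tm j)"
    by (simp add: tm_def sum_subtractf)
  also have "\<dots> \<le> (\<Sum>j\<in>I. (if Ev j then 1 else 0))" by (intro sum_mono tmE)
  finally show ?thesis using sumE by linarith
qed


lemma yf_meas[measurable]: "yf c T \<in> borel_measurable borel"
  unfolding yf_def by measurable
lemma jf_meas[measurable]: "jf c T \<in> borel_measurable borel"
  unfolding jf_def by measurable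

lemma yf_abs: "T \<ge> 0 \<Longrightarrow> \<bar>yf c T y\<bar> \<le> T"
  by (simp add: yf_def)

lemma sumY_abs:
  assumes "T \<ge> 0"
  shows "\<bar>\<Sum>i\<in>A. yf (b i) T (u i)\<bar> \<le> real (card A) * T"
proof -
  have "\<bar>\<Sum>i\<in>A. yf (b i) T (u i)\<bar> \<le> (\<Sum>i\<in>A. \<bar>yf (b i) T (u i)\<bar>)" by (rule sum_abs)
  also have "\<dots> \<le> (\<Sum>i\<in>A. T)" using assms by (intro sum_mono yf_abs)
  also have "\<dots> = real (card A) * T" by simp
  finally show ?thesis .
qed

lemma sumY_sq:
  assumes "T \<ge> 0"
  shows "(\<Sum>i\<in>A. yf (b i) T (u i))\<^sup>2 \<le> (real (card A) * T)\<^sup>2"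
proof -
  have "\<bar>\<Sum>i\<in>A. yf (b i) T (u i)\<bar>\<^sup>2 \<le> (real (card A) * T)\<^sup>2"
    using sumY_abs[OF assms] by (intro power_mono) auto
  thus ?thesis by simp
qed

context hmain
begin

lemma E_jf:
  assumes i: "i \<ge> 1" and c: "c \<ge> 0" and T: "T > 0"
  shows "(\<integral>\<omega>. jf c T (X i \<omega>) \<partial>M) = (if c > 0 then G (T/c) else 0)"
proof -
  have "(\<integral>\<omega>. jf c T (X i \<omega>) \<partial>M) = (\<integral>\<omega>. jf c T (X 1 \<omega>) \<partial>M)" by (rule ident_int[OF i]) simp
  also have "\<dots> = (if c > 0 then G (T/c) else 0)"
  proof (cases "c > 0")
    case True
    have "(\<integral>\<omega>. jf c T (X 1 \<omega>) \<partial>M) = (\<integral>\<omega>. (if T/c < \<bar>X 1 \<omega>\<bar> then 1 else 0) \<partial>M)"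
      by (rule Bochner_Integration.integral_cong) (use True in \<open>auto simp: jf_def abs_mult field_simps\<close>)
    thus ?thesis using True by (simp only: int_ind if_True)
  next
    case False
    hence "c = 0" using c by simp
    thus ?thesis using T by (simp add: jf_def)
  qed
  finally show ?thesis .
qed

lemma E_yf:
  assumes i: "i \<ge> 1" and c: "c \<ge> 0" and T: "T > 0"
  shows "(\<integral>\<omega>. yf c T (X i \<omega>) \<partial>M) = (if c > 0 then c * M1 (T/c) else 0)"
proof -
  have "(\<integral>\<omega>. yf c T (X i \<omega>) \<partial>M) = (\<integral>\<omega>. yf c T (X 1 \<omega>) \<partial>M)" by (rule ident_int[OF i]) simp
  also have "\<dots> = (if c > 0 then c * M1 (T/c) else 0)"
  proof (cases "c > 0")
    case True
    have "(\<integral>\<omega>. yf c T (X 1 \<omega>) \<partial>M) = (\<integral>\<omega>. c * (if \<bar>X 1 \<omega>\<bar> \<le> T/c then X 1 \<omega> else 0) \<partial>M)"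
      by (rule Bochner_Integration.integral_cong) (use True in \<open>auto simp: yf_def abs_mult field_simps\<close>)
    thus ?thesis using True unfolding M1_def by simp
  next
    case False
    hence "c = 0" using c by simp
    thus ?thesis using T by (simp add: yf_def)
  qed
  finally show ?thesis .
qed

lemma E_yf2:
  assumes i: "i \<ge> 1" and c: "c \<ge> 0" and T: "T > 0"
  shows "(\<integral>\<omega>. (yf c T (X i \<omega>))\<^sup>2 \<partial>M) = (if c > 0 then c\<^sup>2 * M2 (T/c) else 0)"
proof -
  have "(\<integral>\<omega>. (yf c T (X i \<omega>))\<^sup>2 \<partial>M) = (\<integral>\<omega>. (yf c T (X 1 \<omega>))\<^sup>2 \<partial>M)"
    by (rule ident_int[OF i, where f="\<lambda>y. (yf c T y)\<^sup>2"]) simp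
  also have "\<dots> = (if c > 0 then c\<^sup>2 * M2 (T/c) else 0)"
  proof (cases "c > 0")
    case True
    have "(\<integral>\<omega>. (yf c T (X 1 \<omega>))\<^sup>2 \<partial>M) = (\<integral>\<omega>. c\<^sup>2 * (if \<bar>X 1 \<omega>\<bar> \<le> T/c then (X 1 \<omega>)\<^sup>2 else 0) \<partial>M)"
      by (rule Bochner_Integration.integral_cong) (use True in \<open>auto simp: yf_def abs_mult field_simps power_mult_distrib\<close>)
    thus ?thesis using True unfolding M2_def by simp
  next
    case False
    hence "c = 0" using c by simp
    thus ?thesis using T by (simp add: yf_def)
  qed
  finally show ?thesis .
qed

end

context hmain
begin

lemma Df_int:
  fixes b :: "nat \<Rightarrow> real"
  assumes fin: "finite I" and sub: "I \<subseteq> {1..}" and bnn: "\<And>i. i \<in> I \<Longrightarrow> b i \<ge> 0"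
  shows "integrable M (\<lambda>\<omega>. \<Sum>j\<in>I. \<Sum>k\<in>I-{j}. jf (b j) T (X j \<omega>) * jf (b k) T (X k \<omega>))"
    and "(\<integral>\<omega>. (\<Sum>j\<in>I. \<Sum>k\<in>I-{j}. jf (b j) T (X j \<omega>) * jf (b k) T (X k \<omega>)) \<partial>M)
         \<le> (\<Sum>j\<in>I. \<integral>\<omega>. jf (b j) T (X j \<omega>) \<partial>M)\<^sup>2"
proof -
  define PJ where "PJ j = (\<integral>\<omega>. jf (b j) T (X j \<omega>) \<partial>M)" for j
  have ti: "integrable M (\<lambda>\<omega>. jf (b j) T (X j \<omega>) * jf (b k) T (X k \<omega>))" for j k
    by (rule bint[where B=1]) (auto simp: jf_def)
  show "integrable M (\<lambda>\<omega>. \<Sum>j\<in>I. \<Sum>k\<in>I-{j}. jf (b j) T (X j \<omega>) * jf (b k) T (X k \<omega>))"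
    by (intro Bochner_Integration.integrable_sum ti)
  have PJ0: "PJ j \<ge> 0" for j unfolding PJ_def by (rule Bochner_Integration.integral_nonneg) (simp add: jf_nonneg)
  have "(\<integral>\<omega>. (\<Sum>j\<in>I. \<Sum>k\<in>I-{j}. jf (b j) T (X j \<omega>) * jf (b k) T (X k \<omega>)) \<partial>M)
      = (\<Sum>j\<in>I. \<Sum>k\<in>I-{j}. (\<integral>\<omega>. jf (b j) T (X j \<omega>) * jf (b k) T (X k \<omega>) \<partial>M))"
    by (simp add: Bochner_Integration.integral_sum Bochner_Integration.integrable_sum ti)
  also have "\<dots> = (\<Sum>j\<in>I. \<Sum>k\<in>I-{j}. PJ j * PJ k)"
  proof (intro sum.cong refl)
    fix j k assume j: "j \<in> I" and k: "k \<in> I - {j}"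
    have "(\<integral>\<omega>. (\<Prod>l\<in>{j,k}. jf (b l) T (X l \<omega>)) \<partial>M) = (\<Prod>l\<in>{j,k}. \<integral>\<omega>. jf (b l) T (X l \<omega>) \<partial>M)"
      by (rule prodexp[where B=1]) (use j k sub in \<open>auto simp: jf_def\<close>)
    thus "(\<integral>\<omega>. jf (b j) T (X j \<omega>) * jf (b k) T (X k \<omega>) \<partial>M) = PJ j * PJ k"
      using k by (simp add: PJ_def)
  qed
  also have "\<dots> \<le> (\<Sum>j\<in>I. \<Sum>k\<in>I. PJ j * PJ k)"
    using fin PJ0 by (intro sum_mono sum_mono2) auto
  also have "\<dots> = (\<Sum>j\<in>I. PJ j)\<^sup>2" by (simp add: power2_eq_square sum_product)
  finally show "(\<integral>\<omega>. (\<Sum>j\<in>I. \<Sum>k\<in>I-{j}. jf (b j) T (X j \<omega>) * jf (b k) T (X k \<omega>)) \<partial>M)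
         \<le> (\<Sum>j\<in>I. \<integral>\<omega>. jf (b j) T (X j \<omega>) \<partial>M)\<^sup>2" by (simp add: PJ_def)
qed

lemma Wf_int:
  fixes b :: "nat \<Rightarrow> real"
  assumes fin: "finite I" and sub: "I \<subseteq> {1..}" and bnn: "\<And>i. i \<in> I \<Longrightarrow> b i \<ge> 0"
    and T: "T > 0" and c: "c > 0"
  defines "V \<equiv> (\<Sum>i\<in>I. \<integral>\<omega>. (yf (b i) T (X i \<omega>))\<^sup>2 \<partial>M) + (\<Sum>i\<in>I. \<bar>\<integral>\<omega>. yf (b i) T (X i \<omega>) \<partial>M\<bar>)\<^sup>2"
  shows "integrable M (\<lambda>\<omega>. \<Sum>j\<in>I. jf (b j) T (X j \<omega>) * ((\<Sum>i\<in>I-{j}. yf (b i) T (X i \<omega>))\<^sup>2 / c))"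
    and "(\<integral>\<omega>. (\<Sum>j\<in>I. jf (b j) T (X j \<omega>) * ((\<Sum>i\<in>I-{j}. yf (b i) T (X i \<omega>))\<^sup>2 / c)) \<partial>M)
         \<le> (\<Sum>j\<in>I. \<integral>\<omega>. jf (b j) T (X j \<omega>) \<partial>M) * (V / c)"
proof -
  define PJ where "PJ j = (\<integral>\<omega>. jf (b j) T (X j \<omega>) \<partial>M)" for j
  have ti: "integrable M (\<lambda>\<omega>. jf (b j) T (X j \<omega>) * ((\<Sum>i\<in>I-{j}. yf (b i) T (X i \<omega>))\<^sup>2 / c))" for j
  proof (rule bint[where B="(real (card (I-{j})) * T)\<^sup>2 / c"])
    fix \<omega>
    have "\<bar>jf (b j) T (X j \<omega>) * ((\<Sum>i\<in>I-{j}. yf (b i) T (X i \<omega>))\<^sup>2 / c)\<bar>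
        = jf (b j) T (X j \<omega>) * ((\<Sum>i\<in>I-{j}. yf (b i) T (X i \<omega>))\<^sup>2 / c)"
      using c by (simp add: jf_nonneg)
    also have "\<dots> \<le> 1 * ((real (card (I-{j})) * T)\<^sup>2 / c)"
      using c T sumY_sq[where T=T and A="I-{j}" and b=b and u="\<lambda>i. X i \<omega>"]
      by (intro mult_mono jf_le1 divide_right_mono) auto
    finally show "\<bar>jf (b j) T (X j \<omega>) * ((\<Sum>i\<in>I-{j}. yf (b i) T (X i \<omega>))\<^sup>2 / c)\<bar> \<le> (real (card (I-{j})) * T)\<^sup>2 / c"
      by simp
  qed simp
  show "integrable M (\<lambda>\<omega>. \<Sum>j\<in>I. jf (b j) T (X j \<omega>) * ((\<Sum>i\<in>I-{j}. yf (b i) T (X i \<omega>))\<^sup>2 / c))"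
    by (intro Bochner_Integration.integrable_sum ti)
  have PJ0: "PJ j \<ge> 0" for j unfolding PJ_def by (rule Bochner_Integration.integral_nonneg) (simp add: jf_nonneg)
  have EY20: "(\<integral>\<omega>. (yf (b i) T (X i \<omega>))\<^sup>2 \<partial>M) \<ge> 0" for i
    by (rule Bochner_Integration.integral_nonneg) simp
  have Vj: "(\<Sum>i\<in>I-{j}. \<integral>\<omega>. (yf (b i) T (X i \<omega>))\<^sup>2 \<partial>M) + (\<Sum>i\<in>I-{j}. \<bar>\<integral>\<omega>. yf (b i) T (X i \<omega>) \<partial>M\<bar>)\<^sup>2 \<le> V" for j
  proof -
    have "(\<Sum>i\<in>I-{j}. \<integral>\<omega>. (yf (b i) T (X i \<omega>))\<^sup>2 \<partial>M) \<le> (\<Sum>i\<in>I. \<integral>\<omega>. (yf (b i) T (X i \<omega>))\<^sup>2 \<partial>M)"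
      using fin EY20 by (intro sum_mono2) auto
    moreover have "(\<Sum>i\<in>I-{j}. \<bar>\<integral>\<omega>. yf (b i) T (X i \<omega>) \<partial>M\<bar>) \<le> (\<Sum>i\<in>I. \<bar>\<integral>\<omega>. yf (b i) T (X i \<omega>) \<partial>M\<bar>)"
      using fin by (intro sum_mono2) auto
    hence "(\<Sum>i\<in>I-{j}. \<bar>\<integral>\<omega>. yf (b i) T (X i \<omega>) \<partial>M\<bar>)\<^sup>2 \<le> (\<Sum>i\<in>I. \<bar>\<integral>\<omega>. yf (b i) T (X i \<omega>) \<partial>M\<bar>)\<^sup>2"
      by (intro power_mono) (auto intro: sum_nonneg)
    ultimately show ?thesis unfolding V_def by linarith
  qed
  have "(\<integral>\<omega>. (\<Sum>j\<in>I. jf (b j) T (X j \<omega>) * ((\<Sum>i\<in>I-{j}. yf (b i) T (X i \<omega>))\<^sup>2 / c)) \<partial>M)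
      = (\<Sum>j\<in>I. (\<integral>\<omega>. jf (b j) T (X j \<omega>) * (\<Sum>i\<in>I-{j}. yf (b i) T (X i \<omega>))\<^sup>2 \<partial>M) / c)"
  proof -
    have "(\<integral>\<omega>. (\<Sum>j\<in>I. jf (b j) T (X j \<omega>) * ((\<Sum>i\<in>I-{j}. yf (b i) T (X i \<omega>))\<^sup>2 / c)) \<partial>M)
      = (\<Sum>j\<in>I. (\<integral>\<omega>. jf (b j) T (X j \<omega>) * ((\<Sum>i\<in>I-{j}. yf (b i) T (X i \<omega>))\<^sup>2 / c) \<partial>M))"
      by (rule Bochner_Integration.integral_sum) (rule ti)
    also have "\<dots> = (\<Sum>j\<in>I. (\<integral>\<omega>. jf (b j) T (X j \<omega>) * (\<Sum>i\<in>I-{j}. yf (b i) T (X i \<omega>))\<^sup>2 \<partial>M) / c)"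
    proof (rule sum.cong[OF refl])
      fix j
      have "(\<lambda>\<omega>. jf (b j) T (X j \<omega>) * ((\<Sum>i\<in>I-{j}. yf (b i) T (X i \<omega>))\<^sup>2 / c))
          = (\<lambda>\<omega>. jf (b j) T (X j \<omega>) * (\<Sum>i\<in>I-{j}. yf (b i) T (X i \<omega>))\<^sup>2 / c)" by auto
      thus "(\<integral>\<omega>. jf (b j) T (X j \<omega>) * ((\<Sum>i\<in>I-{j}. yf (b i) T (X i \<omega>))\<^sup>2 / c) \<partial>M)
          = (\<integral>\<omega>. jf (b j) T (X j \<omega>) * (\<Sum>i\<in>I-{j}. yf (b i) T (X i \<omega>))\<^sup>2 \<partial>M) / c"
        by (simp only: integral_divide_zero)
    qed
    finally show ?thesis .
  qed
  also have "\<dots> \<le> (\<Sum>j\<in>I. PJ j * V / c)"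
  proof (intro sum_mono divide_right_mono)
    fix j assume j: "j \<in> I"
    have "(\<integral>\<omega>. jf (b j) T (X j \<omega>) * (\<Sum>i\<in>I-{j}. yf (b i) T (X i \<omega>))\<^sup>2 \<partial>M)
       \<le> (\<integral>\<omega>. jf (b j) T (X j \<omega>) \<partial>M) * ((\<Sum>i\<in>I-{j}. \<integral>\<omega>. (yf (b i) T (X i \<omega>))\<^sup>2 \<partial>M)
            + (\<Sum>i\<in>I-{j}. \<bar>\<integral>\<omega>. yf (b i) T (X i \<omega>) \<partial>M\<bar>)\<^sup>2)"
      by (rule sq_exp[where Bg=1 and B=T]) (use fin sub j T in \<open>auto simp: jf_nonneg jf_le1 intro: yf_abs\<close>)
    also have "\<dots> \<le> PJ j * V" unfolding PJ_def[symmetric] using PJ0 Vj by (intro mult_left_mono) auto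
    finally show "(\<integral>\<omega>. jf (b j) T (X j \<omega>) * (\<Sum>i\<in>I-{j}. yf (b i) T (X i \<omega>))\<^sup>2 \<partial>M) \<le> PJ j * V" .
  qed (use c in auto)
  also have "\<dots> = (\<Sum>j\<in>I. PJ j) * (V / c)" by (simp add: sum_distrib_right sum_divide_distrib)
  finally show "(\<integral>\<omega>. (\<Sum>j\<in>I. jf (b j) T (X j \<omega>) * ((\<Sum>i\<in>I-{j}. yf (b i) T (X i \<omega>))\<^sup>2 / c)) \<partial>M)
         \<le> (\<Sum>j\<in>I. \<integral>\<omega>. jf (b j) T (X j \<omega>) \<partial>M) * (V / c)" by (simp add: PJ_def)
qed

end

context hmain
begin

lemma Af_int:
  fixes b :: "nat \<Rightarrow> real"
  shows "integrable M (\<lambda>\<omega>. \<Sum>j\<in>I. jf (b j) a (X j \<omega>))"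
    and "(\<integral>\<omega>. (\<Sum>j\<in>I. jf (b j) a (X j \<omega>)) \<partial>M) = (\<Sum>j\<in>I. \<integral>\<omega>. jf (b j) a (X j \<omega>) \<partial>M)"
proof -
  have ti: "integrable M (\<lambda>\<omega>. jf (b j) a (X j \<omega>))" for j
    by (rule bint[where B=1]) (auto simp: jf_def)
  show "integrable M (\<lambda>\<omega>. \<Sum>j\<in>I. jf (b j) a (X j \<omega>))" by (intro Bochner_Integration.integrable_sum ti)
  show "(\<integral>\<omega>. (\<Sum>j\<in>I. jf (b j) a (X j \<omega>)) \<partial>M) = (\<Sum>j\<in>I. \<integral>\<omega>. jf (b j) a (X j \<omega>) \<partial>M)"
    by (rule Bochner_Integration.integral_sum) (rule ti)
qed

lemma core_upper:
  fixes b :: "nat \<Rightarrow> real"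
  assumes fin: "finite I" and sub: "I \<subseteq> {1..}" and m: "m \<ge> 1" "m \<notin> I"
    and bnn: "\<And>i. i \<in> I \<Longrightarrow> b i \<ge> 0" and x: "x > 0" and e: "0 < \<epsilon>" "\<epsilon> < 1" and T: "T > 0"
  defines "V \<equiv> (\<Sum>i\<in>I. \<integral>\<omega>. (yf (b i) T (X i \<omega>))\<^sup>2 \<partial>M) + (\<Sum>i\<in>I. \<bar>\<integral>\<omega>. yf (b i) T (X i \<omega>) \<partial>M\<bar>)\<^sup>2"
  shows "prob {\<omega> \<in> space M. x < \<bar>\<Sum>i\<in>I. b i * X i \<omega>\<bar>}
     \<le> V / x\<^sup>2 + (\<Sum>j\<in>I. \<integral>\<omega>. jf (b j) T (X j \<omega>) \<partial>M)\<^sup>2 + (\<Sum>j\<in>I. \<integral>\<omega>. jf (b j) ((1-\<epsilon>)*x) (X j \<omega>) \<partial>M)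
       + (\<Sum>j\<in>I. \<integral>\<omega>. jf (b j) T (X j \<omega>) \<partial>M) * (V / (\<epsilon>*x)\<^sup>2)"
proof -
  define Z where "Z \<omega> = (\<Sum>i\<in>I. yf (b i) T (X i \<omega>))\<^sup>2 / x\<^sup>2" for \<omega>
  define D where "D \<omega> = (\<Sum>j\<in>I. \<Sum>k\<in>I-{j}. jf (b j) T (X j \<omega>) * jf (b k) T (X k \<omega>))" for \<omega>
  define A where "A \<omega> = (\<Sum>j\<in>I. jf (b j) ((1-\<epsilon>)*x) (X j \<omega>))" for \<omega>
  define W where "W \<omega> = (\<Sum>j\<in>I. jf (b j) T (X j \<omega>) * ((\<Sum>i\<in>I-{j}. yf (b i) T (X i \<omega>))\<^sup>2 / (\<epsilon>*x)\<^sup>2))" for \<omega>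
  have Zi: "integrable M Z"
  proof (rule bint[where B="(real (card I) * T)\<^sup>2 / x\<^sup>2"])
    fix \<omega> show "\<bar>Z \<omega>\<bar> \<le> (real (card I) * T)\<^sup>2 / x\<^sup>2"
      unfolding Z_def using sumY_sq[where T=T and A=I and b=b and u="\<lambda>i. X i \<omega>"] T x
      by (auto intro: divide_right_mono)
  qed (unfold Z_def, measurable)
  have Di: "integrable M D" unfolding D_def by (rule Df_int(1)[OF fin sub bnn])
  have Ai: "integrable M A" unfolding A_def by (rule Af_int(1))
  have epos: "0 < (\<epsilon> * x)\<^sup>2" using e(1) x by simp
  have Wi: "integrable M W" unfolding W_def by (rule Wf_int(1)[OF fin sub bnn T epos])
  have "prob {\<omega> \<in> space M. x < \<bar>\<Sum>i\<in>I. b i * X i \<omega>\<bar>} \<le> (\<integral>\<omega>. Z \<omega> + D \<omega> + A \<omega> + W \<omega> \<partial>M)"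
  proof (rule prob_le_int)
    show "{\<omega> \<in> space M. x < \<bar>\<Sum>i\<in>I. b i * X i \<omega>\<bar>} \<in> events" by measurable
    show "integrable M (\<lambda>\<omega>. Z \<omega> + D \<omega> + A \<omega> + W \<omega>)" using Zi Di Ai Wi by simp
    fix \<omega> assume "\<omega> \<in> space M"
    hence "indicator {\<omega> \<in> space M. x < \<bar>\<Sum>i\<in>I. b i * X i \<omega>\<bar>} \<omega> = (if x < \<bar>\<Sum>i\<in>I. b i * X i \<omega>\<bar> then 1 else 0::real)"
      by (simp add: indicator_def)
    also have "\<dots> \<le> Z \<omega> + D \<omega> + A \<omega> + W \<omega>"
      unfolding Z_def D_def A_def W_def by (rule pw_upper[OF fin x e])
    finally show "indicator {\<omega> \<in> space M. x < \<bar>\<Sum>i\<in>I. b i * X i \<omega>\<bar>} \<omega> \<le> Z \<omega> + D \<omega> + A \<omega> + W \<omega>" .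
  qed
  also have "(\<integral>\<omega>. Z \<omega> + D \<omega> + A \<omega> + W \<omega> \<partial>M) = (\<integral>\<omega>. Z \<omega> \<partial>M) + (\<integral>\<omega>. D \<omega> \<partial>M) + (\<integral>\<omega>. A \<omega> \<partial>M) + (\<integral>\<omega>. W \<omega> \<partial>M)"
    using Zi Di Ai Wi by simp
  also have "(\<integral>\<omega>. Z \<omega> \<partial>M) \<le> V / x\<^sup>2"
  proof -
    have "(\<integral>\<omega>. (\<lambda>_. 1::real) (X m \<omega>) * (\<Sum>i\<in>I. yf (b i) T (X i \<omega>))\<^sup>2 \<partial>M)
        \<le> (\<integral>\<omega>. (\<lambda>_. 1::real) (X m \<omega>) \<partial>M) * V"
      unfolding V_def by (rule sq_exp[where Bg=1 and B=T]) (use fin sub m T in \<open>auto intro: yf_abs\<close>)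
    hence "(\<integral>\<omega>. (\<Sum>i\<in>I. yf (b i) T (X i \<omega>))\<^sup>2 \<partial>M) \<le> V" by (simp add: prob_space)
    moreover have "(\<integral>\<omega>. Z \<omega> \<partial>M) = (\<integral>\<omega>. (\<Sum>i\<in>I. yf (b i) T (X i \<omega>))\<^sup>2 \<partial>M) / x\<^sup>2"
      unfolding Z_def by (rule integral_divide_zero)
    ultimately show ?thesis using x by (simp add: divide_right_mono)
  qed
  also have "(\<integral>\<omega>. D \<omega> \<partial>M) \<le> (\<Sum>j\<in>I. \<integral>\<omega>. jf (b j) T (X j \<omega>) \<partial>M)\<^sup>2"
    unfolding D_def by (rule Df_int(2)[OF fin sub bnn])
  also have "(\<integral>\<omega>. A \<omega> \<partial>M) = (\<Sum>j\<in>I. \<integral>\<omega>. jf (b j) ((1-\<epsilon>)*x) (X j \<omega>) \<partial>M)"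
    unfolding A_def by (rule Af_int(2))
  also have "(\<integral>\<omega>. W \<omega> \<partial>M) \<le> (\<Sum>j\<in>I. \<integral>\<omega>. jf (b j) T (X j \<omega>) \<partial>M) * (V / (\<epsilon>*x)\<^sup>2)"
    unfolding W_def V_def by (rule Wf_int(2)[OF fin sub bnn T epos])
  finally show ?thesis by simp
qed

lemma core_lower:
  fixes b :: "nat \<Rightarrow> real"
  assumes fin: "finite I" and sub: "I \<subseteq> {1..}"
    and bnn: "\<And>i. i \<in> I \<Longrightarrow> b i \<ge> 0" and x: "x > 0" and e: "0 < \<epsilon>" and T: "T > 0"
    and Tle: "T \<le> (1+\<epsilon>)*x"
  defines "V \<equiv> (\<Sum>i\<in>I. \<integral>\<omega>. (yf (b i) T (X i \<omega>))\<^sup>2 \<partial>M) + (\<Sum>i\<in>I. \<bar>\<integral>\<omega>. yf (b i) T (X i \<omega>) \<partial>M\<bar>)\<^sup>2"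
  shows "(\<Sum>j\<in>I. \<integral>\<omega>. jf (b j) ((1+\<epsilon>)*x) (X j \<omega>) \<partial>M) - (\<Sum>j\<in>I. \<integral>\<omega>. jf (b j) T (X j \<omega>) \<partial>M)\<^sup>2
       - (\<Sum>j\<in>I. \<integral>\<omega>. jf (b j) T (X j \<omega>) \<partial>M) * (V / (\<epsilon>*x)\<^sup>2)
     \<le> prob {\<omega> \<in> space M. x < \<bar>\<Sum>i\<in>I. b i * X i \<omega>\<bar>}"
proof -
  define D where "D \<omega> = (\<Sum>j\<in>I. \<Sum>k\<in>I-{j}. jf (b j) T (X j \<omega>) * jf (b k) T (X k \<omega>))" for \<omega>
  define A where "A \<omega> = (\<Sum>j\<in>I. jf (b j) ((1+\<epsilon>)*x) (X j \<omega>))" for \<omega>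
  define W where "W \<omega> = (\<Sum>j\<in>I. jf (b j) T (X j \<omega>) * ((\<Sum>i\<in>I-{j}. yf (b i) T (X i \<omega>))\<^sup>2 / (\<epsilon>*x)\<^sup>2))" for \<omega>
  have Di: "integrable M D" unfolding D_def by (rule Df_int(1)[OF fin sub bnn])
  have Ai: "integrable M A" unfolding A_def by (rule Af_int(1))
  have epos: "0 < (\<epsilon> * x)\<^sup>2" using e(1) x by simp
  have Wi: "integrable M W" unfolding W_def by (rule Wf_int(1)[OF fin sub bnn T epos])
  have "(\<Sum>j\<in>I. \<integral>\<omega>. jf (b j) ((1+\<epsilon>)*x) (X j \<omega>) \<partial>M) - (\<Sum>j\<in>I. \<integral>\<omega>. jf (b j) T (X j \<omega>) \<partial>M)\<^sup>2
       - (\<Sum>j\<in>I. \<integral>\<omega>. jf (b j) T (X j \<omega>) \<partial>M) * (V / (\<epsilon>*x)\<^sup>2)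
     \<le> (\<integral>\<omega>. A \<omega> \<partial>M) - (\<integral>\<omega>. D \<omega> \<partial>M) - (\<integral>\<omega>. W \<omega> \<partial>M)"
  proof -
    have "(\<integral>\<omega>. A \<omega> \<partial>M) = (\<Sum>j\<in>I. \<integral>\<omega>. jf (b j) ((1+\<epsilon>)*x) (X j \<omega>) \<partial>M)"
      unfolding A_def by (rule Af_int(2))
    moreover have "(\<integral>\<omega>. D \<omega> \<partial>M) \<le> (\<Sum>j\<in>I. \<integral>\<omega>. jf (b j) T (X j \<omega>) \<partial>M)\<^sup>2"
      unfolding D_def by (rule Df_int(2)[OF fin sub bnn])
    moreover have "(\<integral>\<omega>. W \<omega> \<partial>M) \<le> (\<Sum>j\<in>I. \<integral>\<omega>. jf (b j) T (X j \<omega>) \<partial>M) * (V / (\<epsilon>*x)\<^sup>2)"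
      unfolding W_def V_def by (rule Wf_int(2)[OF fin sub bnn T epos])
    ultimately show ?thesis by linarith
  qed
  also have "\<dots> = (\<integral>\<omega>. A \<omega> - D \<omega> - W \<omega> \<partial>M)" using Ai Di Wi by simp
  also have "\<dots> \<le> prob {\<omega> \<in> space M. x < \<bar>\<Sum>i\<in>I. b i * X i \<omega>\<bar>}"
  proof (rule int_le_prob)
    show "{\<omega> \<in> space M. x < \<bar>\<Sum>i\<in>I. b i * X i \<omega>\<bar>} \<in> events" by measurable
    show "integrable M (\<lambda>\<omega>. A \<omega> - D \<omega> - W \<omega>)" using Ai Di Wi by simp
    fix \<omega> assume "\<omega> \<in> space M"
    have "A \<omega> - D \<omega> - W \<omega> \<le> (if x < \<bar>\<Sum>i\<in>I. b i * X i \<omega>\<bar> then 1 else 0::real)"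
      unfolding A_def D_def W_def by (rule pw_lower[OF fin x e(1) Tle])
    also have "\<dots> = indicator {\<omega> \<in> space M. x < \<bar>\<Sum>i\<in>I. b i * X i \<omega>\<bar>} \<omega>"
      using \<open>\<omega> \<in> space M\<close> by (simp add: indicator_def)
    finally show "A \<omega> - D \<omega> - W \<omega> \<le> indicator {\<omega> \<in> space M. x < \<bar>\<Sum>i\<in>I. b i * X i \<omega>\<bar>} \<omega>" .
  qed
  finally show ?thesis .
qed

end

lemma pwA:
  fixes b T \<alpha> :: real assumes "b > 0" "T > 0"
  shows "b\<^sup>2 * (T/b) powr (2-\<alpha>) = T powr (2-\<alpha>) * b powr \<alpha>"
proof (rule ln_inj_iff[THEN iffD1])
  show "0 < b\<^sup>2 * (T/b) powr (2-\<alpha>)" "0 < T powr (2-\<alpha>) * b powr \<alpha>" using assms by auto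
  show "ln (b\<^sup>2 * (T/b) powr (2-\<alpha>)) = ln (T powr (2-\<alpha>) * b powr \<alpha>)"
    using assms by (simp add: ln_mult ln_div ln_powr ln_realpow algebra_simps)
qed

lemma pwB:
  fixes b T \<alpha> :: real assumes "b > 0" "T > 0"
  shows "b * (T/b) powr (1-\<alpha>) = T powr (1-\<alpha>) * b powr \<alpha>"
proof (rule ln_inj_iff[THEN iffD1])
  show "0 < b * (T/b) powr (1-\<alpha>)" "0 < T powr (1-\<alpha>) * b powr \<alpha>" using assms by auto
  show "ln (b * (T/b) powr (1-\<alpha>)) = ln (T powr (1-\<alpha>) * b powr \<alpha>)"
    using assms by (simp add: ln_mult ln_div ln_powr algebra_simps)
qed

lemma pwC:
  fixes x \<delta> \<alpha> :: real assumes "x > 0" "\<delta> > 0"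
  shows "x powr \<alpha> * (\<delta>*x) powr (2-\<alpha>) / x\<^sup>2 = \<delta> powr (2-\<alpha>)"
proof (rule ln_inj_iff[THEN iffD1])
  show "0 < x powr \<alpha> * (\<delta>*x) powr (2-\<alpha>) / x\<^sup>2" "0 < \<delta> powr (2-\<alpha>)" using assms by auto
  show "ln (x powr \<alpha> * (\<delta>*x) powr (2-\<alpha>) / x\<^sup>2) = ln (\<delta> powr (2-\<alpha>))"
    using assms by (simp add: ln_mult ln_div ln_powr ln_realpow algebra_simps)
qed

lemma pwD:
  fixes x \<delta> \<alpha> :: real assumes "x > 0" "\<delta> > 0"
  shows "x powr \<alpha> * ((\<delta>*x) powr (1-\<alpha>))\<^sup>2 / x\<^sup>2 = \<delta> powr (2-2*\<alpha>) * x powr (-\<alpha>)"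
proof (rule ln_inj_iff[THEN iffD1])
  show "0 < x powr \<alpha> * ((\<delta>*x) powr (1-\<alpha>))\<^sup>2 / x\<^sup>2" "0 < \<delta> powr (2-2*\<alpha>) * x powr (-\<alpha>)" using assms by auto
  show "ln (x powr \<alpha> * ((\<delta>*x) powr (1-\<alpha>))\<^sup>2 / x\<^sup>2) = ln (\<delta> powr (2-2*\<alpha>) * x powr (-\<alpha>))"
    using assms by (simp add: ln_mult ln_div ln_powr ln_realpow algebra_simps)
qed

context hmain
begin

lemma V_bound:
  fixes b :: "nat \<Rightarrow> real"
  assumes fin: "finite I" and sub: "I \<subseteq> {1..}" and bnn: "\<And>i. i \<in> I \<Longrightarrow> b i \<ge> 0" and T: "T > 0"
    and K1: "\<And>R. R \<ge> R0 \<Longrightarrow> \<bar>M1 R\<bar> \<le> K1 * R powr (1-\<alpha>)"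
    and K2: "\<And>R. R \<ge> R0 \<Longrightarrow> M2 R \<le> K2 * R powr (2-\<alpha>)"
    and big: "\<And>i. i \<in> I \<Longrightarrow> b i > 0 \<Longrightarrow> T / b i \<ge> R0"
  shows "(\<Sum>i\<in>I. \<integral>\<omega>. (yf (b i) T (X i \<omega>))\<^sup>2 \<partial>M) + (\<Sum>i\<in>I. \<bar>\<integral>\<omega>. yf (b i) T (X i \<omega>) \<partial>M\<bar>)\<^sup>2
    \<le> K2 * T powr (2-\<alpha>) * (\<Sum>i\<in>I. b i powr \<alpha>) + (K1 * T powr (1-\<alpha>) * (\<Sum>i\<in>I. b i powr \<alpha>))\<^sup>2"
proof -
  have s1: "(\<Sum>i\<in>I. \<integral>\<omega>. (yf (b i) T (X i \<omega>))\<^sup>2 \<partial>M) \<le> (\<Sum>i\<in>I. K2 * T powr (2-\<alpha>) * b i powr \<alpha>)"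
  proof (rule sum_mono)
    fix i assume i: "i \<in> I"
    have i1: "i \<ge> 1" using i sub by auto
    show "(\<integral>\<omega>. (yf (b i) T (X i \<omega>))\<^sup>2 \<partial>M) \<le> K2 * T powr (2-\<alpha>) * b i powr \<alpha>"
    proof (cases "b i > 0")
      case True
      have "(\<integral>\<omega>. (yf (b i) T (X i \<omega>))\<^sup>2 \<partial>M) = (b i)\<^sup>2 * M2 (T / b i)"
        using E_yf2[OF i1 bnn[OF i] T] True by simp
      also have "\<dots> \<le> (b i)\<^sup>2 * (K2 * (T / b i) powr (2-\<alpha>))"
        by (intro mult_left_mono K2 big[OF i True]) simp
      also have "\<dots> = K2 * ((b i)\<^sup>2 * (T / b i) powr (2-\<alpha>))" by simp
      also have "\<dots> = K2 * T powr (2-\<alpha>) * b i powr \<alpha>" using pwA[OF True T] by simp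
      finally show ?thesis .
    next
      case False
      hence "b i = 0" using bnn[OF i] by simp
      thus ?thesis using E_yf2[OF i1 bnn[OF i] T] by simp
    qed
  qed
  have s2: "(\<Sum>i\<in>I. \<bar>\<integral>\<omega>. yf (b i) T (X i \<omega>) \<partial>M\<bar>) \<le> (\<Sum>i\<in>I. K1 * T powr (1-\<alpha>) * b i powr \<alpha>)"
  proof (rule sum_mono)
    fix i assume i: "i \<in> I"
    have i1: "i \<ge> 1" using i sub by auto
    show "\<bar>\<integral>\<omega>. yf (b i) T (X i \<omega>) \<partial>M\<bar> \<le> K1 * T powr (1-\<alpha>) * b i powr \<alpha>"
    proof (cases "b i > 0")
      case True
      have "\<bar>\<integral>\<omega>. yf (b i) T (X i \<omega>) \<partial>M\<bar> = b i * \<bar>M1 (T / b i)\<bar>"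
        using E_yf[OF i1 bnn[OF i] T] True by (simp add: abs_mult)
      also have "\<dots> \<le> b i * (K1 * (T / b i) powr (1-\<alpha>))"
        using True by (intro mult_left_mono K1 big[OF i True]) simp
      also have "\<dots> = K1 * (b i * (T / b i) powr (1-\<alpha>))" by simp
      also have "\<dots> = K1 * T powr (1-\<alpha>) * b i powr \<alpha>" using pwB[OF True T] by simp
      finally show ?thesis .
    next
      case False
      hence "b i = 0" using bnn[OF i] by simp
      thus ?thesis using E_yf[OF i1 bnn[OF i] T] by simp
    qed
  qed
  have "(\<Sum>i\<in>I. \<bar>\<integral>\<omega>. yf (b i) T (X i \<omega>) \<partial>M\<bar>)\<^sup>2 \<le> (\<Sum>i\<in>I. K1 * T powr (1-\<alpha>) * b i powr \<alpha>)\<^sup>2"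
    using s2 by (intro power_mono) (auto intro: sum_nonneg)
  with s1 show ?thesis by (simp add: sum_distrib_left)
qed

end

lemma alg_upper:
  fixes x \<epsilon> pr V Vb SJ SA y z :: real
  assumes x: "x > 0" and e: "\<epsilon> > 0" and yz: "y * z = 1" and y: "y > 0"
    and pr: "pr \<le> V / x\<^sup>2 + SJ\<^sup>2 + SA + SJ * (V / (\<epsilon>*x)\<^sup>2)"
    and V: "0 \<le> V" "V \<le> Vb" and SJ: "SJ \<ge> 0"
  shows "y * pr \<le> y * Vb / x\<^sup>2 + (y * SJ)\<^sup>2 * z + y * SA + (y * SJ) * (y * Vb / x\<^sup>2) * z / \<epsilon>\<^sup>2"
proof -
  have "y * pr \<le> y * (V / x\<^sup>2 + SJ\<^sup>2 + SA + SJ * (V / (\<epsilon>*x)\<^sup>2))" using pr y by (intro mult_left_mono) auto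
  also have "\<dots> = y * V / x\<^sup>2 + y * SJ\<^sup>2 + y * SA + y * SJ * V / (\<epsilon>*x)\<^sup>2" by (simp add: algebra_simps)
  also have "y * V / x\<^sup>2 \<le> y * Vb / x\<^sup>2" using V y x by (intro divide_right_mono mult_left_mono) auto
  also have "y * SJ * V / (\<epsilon>*x)\<^sup>2 \<le> y * SJ * Vb / (\<epsilon>*x)\<^sup>2"
    using V y x SJ by (intro divide_right_mono mult_left_mono) auto
  also have "y * SJ\<^sup>2 = (y * SJ)\<^sup>2 * z"
  proof -
    have "(y * SJ)\<^sup>2 * z = y * SJ\<^sup>2 * (y * z)" by (simp add: power2_eq_square algebra_simps)
    thus ?thesis using yz by simp
  qed
  also have "y * SJ * Vb / (\<epsilon>*x)\<^sup>2 = (y * SJ) * (y * Vb / x\<^sup>2) * z / \<epsilon>\<^sup>2"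
  proof -
    have "(y * SJ) * (y * Vb / x\<^sup>2) * z / \<epsilon>\<^sup>2 = (y * SJ * Vb / (\<epsilon>*x)\<^sup>2) * (y * z)"
      using x e by (simp add: power2_eq_square field_simps)
    thus ?thesis using yz by simp
  qed
  finally show ?thesis by simp
qed

lemma alg_lower:
  fixes x \<epsilon> pr V Vb SJ SA y z :: real
  assumes x: "x > 0" and e: "\<epsilon> > 0" and yz: "y * z = 1" and y: "y > 0"
    and pr: "SA - SJ\<^sup>2 - SJ * (V / (\<epsilon>*x)\<^sup>2) \<le> pr"
    and V: "0 \<le> V" "V \<le> Vb" and SJ: "SJ \<ge> 0"
  shows "y * SA - (y * SJ)\<^sup>2 * z - (y * SJ) * (y * Vb / x\<^sup>2) * z / \<epsilon>\<^sup>2 \<le> y * pr"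
proof -
  have "y * SJ * V / (\<epsilon>*x)\<^sup>2 \<le> y * SJ * Vb / (\<epsilon>*x)\<^sup>2"
    using V y x SJ by (intro divide_right_mono mult_left_mono) auto
  moreover have "y * SJ\<^sup>2 = (y * SJ)\<^sup>2 * z"
  proof -
    have "(y * SJ)\<^sup>2 * z = y * SJ\<^sup>2 * (y * z)" by (simp add: power2_eq_square algebra_simps)
    thus ?thesis using yz by simp
  qed
  moreover have "y * SJ * Vb / (\<epsilon>*x)\<^sup>2 = (y * SJ) * (y * Vb / x\<^sup>2) * z / \<epsilon>\<^sup>2"
  proof -
    have "(y * SJ) * (y * Vb / x\<^sup>2) * z / \<epsilon>\<^sup>2 = (y * SJ * Vb / (\<epsilon>*x)\<^sup>2) * (y * z)"
      using x e by (simp add: power2_eq_square field_simps)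
    thus ?thesis using yz by simp
  qed
  moreover have "y * (SA - SJ\<^sup>2 - SJ * (V / (\<epsilon>*x)\<^sup>2)) \<le> y * pr" using pr y by (intro mult_left_mono) auto
  moreover have "y * (SA - SJ\<^sup>2 - SJ * (V / (\<epsilon>*x)\<^sup>2)) = y * SA - y * SJ\<^sup>2 - y * SJ * V / (\<epsilon>*x)\<^sup>2"
    by (simp add: algebra_simps)
  ultimately show ?thesis by linarith
qed

lemma vb_eq:
  fixes x \<delta> \<alpha> K1 K2 s :: real
  assumes x: "x > 0" and d: "\<delta> > 0"
  shows "x powr \<alpha> * (K2 * (\<delta>*x) powr (2-\<alpha>) * s + (K1 * (\<delta>*x) powr (1-\<alpha>) * s)\<^sup>2) / x\<^sup>2
     = K2 * \<delta> powr (2-\<alpha>) * s + K1\<^sup>2 * \<delta> powr (2-2*\<alpha>) * s\<^sup>2 * x powr (-\<alpha>)"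
proof -
  have "x powr \<alpha> * (K2 * (\<delta>*x) powr (2-\<alpha>) * s + (K1 * (\<delta>*x) powr (1-\<alpha>) * s)\<^sup>2) / x\<^sup>2
     = K2 * s * (x powr \<alpha> * (\<delta>*x) powr (2-\<alpha>) / x\<^sup>2) + K1\<^sup>2 * s\<^sup>2 * (x powr \<alpha> * ((\<delta>*x) powr (1-\<alpha>))\<^sup>2 / x\<^sup>2)"
    by (simp add: power_mult_distrib add_divide_distrib distrib_left mult_ac)
  also have "\<dots> = K2 * s * \<delta> powr (2-\<alpha>) + K1\<^sup>2 * s\<^sup>2 * (\<delta> powr (2-2*\<alpha>) * x powr (-\<alpha>))"
    using x d by (simp only: pwC pwD)
  finally show ?thesis by (simp add: mult_ac)
qed

context hmain
begin

lemma main_result: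
  fixes b :: "nat \<Rightarrow> nat \<Rightarrow> real" and xs :: "nat \<Rightarrow> real" and \<gamma>0 :: real
  assumes a1: "\<alpha> = 1 \<Longrightarrow> ((\<lambda>R. LINT x:{-R<..<R}|distr M borel (X 1). x) \<longlongrightarrow> \<gamma>0) at_top"
    and a2: "\<alpha> > 1 \<Longrightarrow> integrable M (X 1) \<and> (\<integral>\<omega>. X 1 \<omega> \<partial>M) = 0"
    and b_nonneg: "\<And>j n. 1 \<le> j \<Longrightarrow> j \<le> n \<Longrightarrow> b j n \<ge> 0"
    and b_max: "(\<lambda>n. Max ((\<lambda>j. b j n) ` {1..n})) \<longlonglongrightarrow> 0"
    and b_sum: "(\<lambda>n. \<Sum>j=1..n. b j n powr \<alpha>) \<longlonglongrightarrow> 1"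
    and xs_lim: "filterlim xs at_top sequentially"
  shows "(\<lambda>n. xs n powr \<alpha> * prob {\<omega> \<in> space M. \<bar>\<Sum>j=1..n. b j n * X j \<omega>\<bar> > xs n}) \<longlonglongrightarrow> c0p + c0m"
proof -
  define c0 where "c0 = c0p + c0m"
  obtain K1 R1 where R1: "R1 > 0" and K1: "\<And>R. R \<ge> R1 \<Longrightarrow> \<bar>M1 R\<bar> \<le> K1 * R powr (1-\<alpha>)"
    using M1_bound[OF a1 a2] by blast
  obtain K2 R2 where R2: "R2 > 0" and K2: "\<And>R. R \<ge> R2 \<Longrightarrow> M2 R \<le> K2 * R powr (2-\<alpha>)"
    using M2_bound by blast
  define R0 where "R0 = max R1 R2"
  have R0pos: "R0 > 0" using R1 R2 by (simp add: R0_def)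
  have K1': "\<And>R. R \<ge> R0 \<Longrightarrow> \<bar>M1 R\<bar> \<le> K1 * R powr (1-\<alpha>)" using K1 by (simp add: R0_def)
  have K2': "\<And>R. R \<ge> R0 \<Longrightarrow> M2 R \<le> K2 * R powr (2-\<alpha>)" using K2 by (simp add: R0_def)
  define s where "s n = (\<Sum>j=1..n. b j n powr \<alpha>)" for n
  have slim: "s \<longlonglongrightarrow> 1" using b_sum by (simp add: s_def[abs_def])
  define Q where "Q n = xs n powr \<alpha> * prob {\<omega> \<in> space M. xs n < \<bar>\<Sum>j\<in>{1..n}. b j n * X j \<omega>\<bar>}" for n
  define PG where "PG a n = xs n powr \<alpha> * (\<Sum>j=1..n. if b j n > 0 then G (a * xs n / b j n) else 0)" for a n
  have PGlim: "PG a \<longlonglongrightarrow> c0 * a powr (-\<alpha>)" if "a > 0" for a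
    unfolding PG_def[abs_def] c0_def by (rule main_sum[OF G_lim that b_nonneg b_max b_sum xs_lim])
  have xneg: "(\<lambda>n. xs n powr (-\<alpha>)) \<longlonglongrightarrow> 0"
    by (rule tendsto_neg_powr[OF _ xs_lim]) (use alpha in simp)
  have "Q \<longlonglongrightarrow> c0"
  proof (rule tendstoI)
    fix \<eta> :: real assume \<eta>: "\<eta> > 0"
    have t1: "((\<lambda>e::real. c0 * (1 - e) powr (-\<alpha>)) \<longlongrightarrow> c0 * (1 - 0) powr (-\<alpha>)) (at_right 0)"
      by (intro tendsto_intros) auto
    have t2: "((\<lambda>e::real. c0 * (1 + e) powr (-\<alpha>)) \<longlongrightarrow> c0 * (1 + 0) powr (-\<alpha>)) (at_right 0)"
      by (intro tendsto_intros) auto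
    have t3: "((\<lambda>e::real. e) \<longlongrightarrow> 0) (at_right 0)" by (rule tendsto_ident_at)
    have "eventually (\<lambda>e. c0 * (1 - e) powr (-\<alpha>) < c0 + \<eta>/3) (at_right (0::real))"
      using t1 \<eta> by (intro order_tendstoD(2)) auto
    moreover have "eventually (\<lambda>e. c0 * (1 + e) powr (-\<alpha>) > c0 - \<eta>/3) (at_right (0::real))"
      using t2 \<eta> by (intro order_tendstoD(1)) auto
    moreover have "eventually (\<lambda>e. e < 1/2) (at_right (0::real))"
      using t3 by (intro order_tendstoD(2)) auto
    moreover have "eventually (\<lambda>e. 0 < e) (at_right (0::real))" by (rule eventually_at_right_less)
    ultimately have "eventually (\<lambda>e. c0 * (1 - e) powr (-\<alpha>) < c0 + \<eta>/3 \<and> c0 * (1 + e) powr (-\<alpha>) > c0 - \<eta>/3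
        \<and> e < 1/2 \<and> 0 < e) (at_right (0::real))"
      by eventually_elim auto
    then obtain \<epsilon> where \<epsilon>: "c0 * (1 - \<epsilon>) powr (-\<alpha>) < c0 + \<eta>/3" "c0 * (1 + \<epsilon>) powr (-\<alpha>) > c0 - \<eta>/3"
      "\<epsilon> < 1/2" "0 < \<epsilon>"
      using eventually_happens'[OF trivial_limit_at_right_real] by blast
    have t4: "((\<lambda>d::real. K2 * d powr (2-\<alpha>)) \<longlongrightarrow> K2 * 0) (at_right 0)"
    proof (intro tendsto_mult tendsto_const tendsto_zero_powrI[OF tendsto_ident_at tendsto_const])
      show "eventually (\<lambda>d::real. 0 \<le> d) (at_right 0)"
        using eventually_at_right_less[of "0::real"] by eventually_elim simp
      show "0 < 2 - \<alpha>" using alpha by simp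
    qed
    have "eventually (\<lambda>d. K2 * d powr (2-\<alpha>) < \<eta>/3) (at_right (0::real))"
      using t4 \<eta> by (intro order_tendstoD(2)) auto
    moreover have "eventually (\<lambda>d. d < 1/2) (at_right (0::real))"
      using t3 by (intro order_tendstoD(2)) auto
    moreover have "eventually (\<lambda>d. 0 < d) (at_right (0::real))" by (rule eventually_at_right_less)
    ultimately have "eventually (\<lambda>d. K2 * d powr (2-\<alpha>) < \<eta>/3 \<and> d < 1/2 \<and> 0 < d) (at_right (0::real))"
      by eventually_elim auto
    then obtain \<delta> where \<delta>: "K2 * \<delta> powr (2-\<alpha>) < \<eta>/3" "\<delta> < 1/2" "0 < \<delta>"
      using eventually_happens'[OF trivial_limit_at_right_real] by blast
    define u where "u n = K2 * \<delta> powr (2-\<alpha>) * s n + K1\<^sup>2 * \<delta> powr (2-2*\<alpha>) * (s n)\<^sup>2 * xs n powr (-\<alpha>)" for n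
    define U where "U n = u n + (PG \<delta> n)\<^sup>2 * xs n powr (-\<alpha>) + PG (1-\<epsilon>) n + PG \<delta> n * u n * xs n powr (-\<alpha>) / \<epsilon>\<^sup>2" for n
    define L where "L n = PG (1+\<epsilon>) n - (PG \<delta> n)\<^sup>2 * xs n powr (-\<alpha>) - PG \<delta> n * u n * xs n powr (-\<alpha>) / \<epsilon>\<^sup>2" for n
    have ulim: "u \<longlonglongrightarrow> K2 * \<delta> powr (2-\<alpha>)"
    proof -
      have "u \<longlonglongrightarrow> K2 * \<delta> powr (2-\<alpha>) * 1 + K1\<^sup>2 * \<delta> powr (2-2*\<alpha>) * 1\<^sup>2 * 0"
        unfolding u_def[abs_def] by (intro tendsto_intros slim xneg)
      thus ?thesis by simp
    qed
    have Ulim: "U \<longlonglongrightarrow> K2 * \<delta> powr (2-\<alpha>) + (c0 * \<delta> powr (-\<alpha>))\<^sup>2 * 0 + c0 * (1-\<epsilon>) powr (-\<alpha>)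
        + c0 * \<delta> powr (-\<alpha>) * (K2 * \<delta> powr (2-\<alpha>)) * 0 / \<epsilon>\<^sup>2"
      unfolding U_def[abs_def] using \<epsilon> \<delta>
      by (intro tendsto_intros ulim xneg PGlim) auto
    have Llim: "L \<longlonglongrightarrow> c0 * (1+\<epsilon>) powr (-\<alpha>) - (c0 * \<delta> powr (-\<alpha>))\<^sup>2 * 0
        - c0 * \<delta> powr (-\<alpha>) * (K2 * \<delta> powr (2-\<alpha>)) * 0 / \<epsilon>\<^sup>2"
      unfolding L_def[abs_def] using \<epsilon> \<delta>
      by (intro tendsto_intros ulim xneg PGlim) auto
    have Ulim': "U \<longlonglongrightarrow> K2 * \<delta> powr (2-\<alpha>) + c0 * (1-\<epsilon>) powr (-\<alpha>)" using Ulim by simp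
    have "K2 * \<delta> powr (2-\<alpha>) + c0 * (1-\<epsilon>) powr (-\<alpha>) < c0 + \<eta>/3 + \<eta>/3" using \<epsilon> \<delta> by linarith
    hence evU: "eventually (\<lambda>n. U n < c0 + \<eta>/3 + \<eta>/3) sequentially"
      by (rule order_tendstoD(2)[OF Ulim'])
    have Llim': "L \<longlonglongrightarrow> c0 * (1+\<epsilon>) powr (-\<alpha>)" using Llim by simp
    have "c0 - \<eta>/3 - \<eta>/3 < c0 * (1+\<epsilon>) powr (-\<alpha>)" using \<epsilon> \<eta> by linarith
    hence evL: "eventually (\<lambda>n. L n > c0 - \<eta>/3 - \<eta>/3) sequentially"
      by (rule order_tendstoD(1)[OF Llim'])
    have evx: "eventually (\<lambda>n. xs n \<ge> 1) sequentially"
      using xs_lim filterlim_at_top by blast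
    have evb: "eventually (\<lambda>n. Max ((\<lambda>j. b j n) ` {1..n}) < \<delta> / R0) sequentially"
      using b_max \<delta> R0pos by (intro order_tendstoD(2)) auto
    show "eventually (\<lambda>n. dist (Q n) c0 < \<eta>) sequentially"
      using evU evL evx evb
    proof eventually_elim
      case (elim n)
      define x where "x = xs n"
      have x: "x > 0" "x \<ge> 1" using elim by (auto simp: x_def)
      define T where "T = \<delta> * x"
      have T: "T > 0" using x \<delta> by (simp add: T_def)
      define bb where "bb j = b j n" for j
      have bnn: "\<And>j. j \<in> {1..n} \<Longrightarrow> bb j \<ge> 0" using b_nonneg by (auto simp: bb_def)
      have big: "T / bb j \<ge> R0" if j: "j \<in> {1..n}" and bpos: "bb j > 0" for j
      proof -
        have "bb j \<le> Max ((\<lambda>j. b j n) ` {1..n})" using j by (auto simp: bb_def intro: Max_ge)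
        hence "R0 * bb j \<le> R0 * Max ((\<lambda>j. b j n) ` {1..n})" using R0pos by (intro mult_left_mono) auto
        moreover have "R0 * Max ((\<lambda>j. b j n) ` {1..n}) < \<delta>" using elim R0pos by (simp add: field_simps)
        ultimately have "bb j * R0 \<le> \<delta>" by (simp add: mult.commute)
        hence "R0 \<le> \<delta> / bb j" using bpos by (simp add: field_simps)
        also have "\<delta> / bb j \<le> T / bb j" using x bpos \<delta> unfolding T_def
          by (intro divide_right_mono) auto
        finally show ?thesis .
      qed
      define V where "V = (\<Sum>i\<in>{1..n}. \<integral>\<omega>. (yf (bb i) T (X i \<omega>))\<^sup>2 \<partial>M) + (\<Sum>i\<in>{1..n}. \<bar>\<integral>\<omega>. yf (bb i) T (X i \<omega>) \<partial>M\<bar>)\<^sup>2"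
      define Vb where "Vb = K2 * T powr (2-\<alpha>) * s n + (K1 * T powr (1-\<alpha>) * s n)\<^sup>2"
      have V0: "0 \<le> V" unfolding V_def
        by (intro add_nonneg_nonneg sum_nonneg Bochner_Integration.integral_nonneg) auto
      have VVb: "V \<le> Vb" unfolding V_def Vb_def s_def
        using V_bound[of "{1..n}" bb T R0 K1 K2] bnn T K1' K2' big by (auto simp: bb_def)
      define SJ where "SJ = (\<Sum>j\<in>{1..n}. \<integral>\<omega>. jf (bb j) T (X j \<omega>) \<partial>M)"
      have SJ0: "SJ \<ge> 0" unfolding SJ_def
        by (intro sum_nonneg Bochner_Integration.integral_nonneg) (auto simp: jf_nonneg)
      have PGeq: "xs n powr \<alpha> * (\<Sum>j\<in>{1..n}. \<integral>\<omega>. jf (bb j) (a * x) (X j \<omega>) \<partial>M) = PG a n"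
        if a: "a > 0" for a
      proof -
        have "(\<Sum>j\<in>{1..n}. \<integral>\<omega>. jf (bb j) (a * x) (X j \<omega>) \<partial>M)
            = (\<Sum>j\<in>{1..n}. if b j n > 0 then G (a * xs n / b j n) else 0)"
        proof (rule sum.cong[OF refl])
          fix j assume j: "j \<in> {1..n}"
          show "(\<integral>\<omega>. jf (bb j) (a * x) (X j \<omega>) \<partial>M) = (if b j n > 0 then G (a * xs n / b j n) else 0)"
            using E_jf[of j "bb j" "a * x"] j bnn[OF j] a x by (simp add: bb_def x_def)
        qed
        thus ?thesis by (simp add: PG_def)
      qed
      have SJeq: "xs n powr \<alpha> * SJ = PG \<delta> n" unfolding SJ_def T_def
        using PGeq[of \<delta>] \<delta> by simp
      have yz: "xs n powr \<alpha> * xs n powr (-\<alpha>) = 1" using x by (simp add: x_def powr_minus)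
      have ypos: "xs n powr \<alpha> > 0" using x by (simp add: x_def)
      have ueq: "xs n powr \<alpha> * Vb / x\<^sup>2 = u n"
        unfolding Vb_def u_def T_def x_def using vb_eq[of "xs n" \<delta> \<alpha> K2 "s n" K1] x \<delta> by (simp add: x_def)
      have Qeq: "Q n = xs n powr \<alpha> * prob {\<omega> \<in> space M. x < \<bar>\<Sum>i\<in>{1..n}. bb i * X i \<omega>\<bar>}"
        by (simp add: Q_def bb_def x_def)
      have up: "prob {\<omega> \<in> space M. x < \<bar>\<Sum>i\<in>{1..n}. bb i * X i \<omega>\<bar>}
         \<le> V / x\<^sup>2 + SJ\<^sup>2 + (\<Sum>j\<in>{1..n}. \<integral>\<omega>. jf (bb j) ((1-\<epsilon>)*x) (X j \<omega>) \<partial>M) + SJ * (V / (\<epsilon>*x)\<^sup>2)"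
        unfolding V_def SJ_def
        by (rule core_upper[where m="Suc n"]) (use bnn x \<epsilon> T in auto)
      have "Q n \<le> xs n powr \<alpha> * Vb / x\<^sup>2 + (xs n powr \<alpha> * SJ)\<^sup>2 * xs n powr (-\<alpha>)
          + xs n powr \<alpha> * (\<Sum>j\<in>{1..n}. \<integral>\<omega>. jf (bb j) ((1-\<epsilon>)*x) (X j \<omega>) \<partial>M)
          + (xs n powr \<alpha> * SJ) * (xs n powr \<alpha> * Vb / x\<^sup>2) * xs n powr (-\<alpha>) / \<epsilon>\<^sup>2"
        unfolding Qeq by (rule alg_upper[OF x(1) \<epsilon>(4) yz ypos up V0 VVb SJ0])
      also have "\<dots> = U n" unfolding U_def ueq SJeq using PGeq[of "1-\<epsilon>"] \<epsilon> by simp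
      finally have QU: "Q n \<le> U n" .
      have lo: "(\<Sum>j\<in>{1..n}. \<integral>\<omega>. jf (bb j) ((1+\<epsilon>)*x) (X j \<omega>) \<partial>M) - SJ\<^sup>2 - SJ * (V / (\<epsilon>*x)\<^sup>2)
         \<le> prob {\<omega> \<in> space M. x < \<bar>\<Sum>i\<in>{1..n}. bb i * X i \<omega>\<bar>}"
        unfolding V_def SJ_def
      proof (rule core_lower)
        show "T \<le> (1 + \<epsilon>) * x" using \<delta> \<epsilon> x unfolding T_def by (intro mult_right_mono) auto
      qed (use bnn x \<epsilon> T in auto)
      have "xs n powr \<alpha> * (\<Sum>j\<in>{1..n}. \<integral>\<omega>. jf (bb j) ((1+\<epsilon>)*x) (X j \<omega>) \<partial>M) - (xs n powr \<alpha> * SJ)\<^sup>2 * xs n powr (-\<alpha>)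
          - (xs n powr \<alpha> * SJ) * (xs n powr \<alpha> * Vb / x\<^sup>2) * xs n powr (-\<alpha>) / \<epsilon>\<^sup>2 \<le> Q n"
        unfolding Qeq by (rule alg_lower[OF x(1) \<epsilon>(4) yz ypos lo V0 VVb SJ0])
      moreover have "xs n powr \<alpha> * (\<Sum>j\<in>{1..n}. \<integral>\<omega>. jf (bb j) ((1+\<epsilon>)*x) (X j \<omega>) \<partial>M) - (xs n powr \<alpha> * SJ)\<^sup>2 * xs n powr (-\<alpha>)
          - (xs n powr \<alpha> * SJ) * (xs n powr \<alpha> * Vb / x\<^sup>2) * xs n powr (-\<alpha>) / \<epsilon>\<^sup>2 = L n"
        unfolding L_def ueq SJeq using PGeq[of "1+\<epsilon>"] \<epsilon> by simp
      ultimately have QL: "L n \<le> Q n" by simp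
      show ?case using QU QL elim \<eta> by (simp add: dist_real_def abs_less_iff)
    qed
  qed
  moreover have "Q = (\<lambda>n. xs n powr \<alpha> * prob {\<omega> \<in> space M. \<bar>\<Sum>j=1..n. b j n * X j \<omega>\<bar> > xs n})"
    by (simp add: Q_def[abs_def])
  ultimately show ?thesis by (simp add: c0_def)
qed

end

theorem corollary4p3:
  fixes M :: "'a measure"
    and X :: "nat \<Rightarrow> 'a \<Rightarrow> real"
    and F0 :: "real \<Rightarrow> real"
    and \<alpha> c0p c0m \<gamma>0 :: real
    and b :: "nat \<Rightarrow> nat \<Rightarrow> real"
    and xs :: "nat \<Rightarrow> real"
  assumes P: "prob_space M"
    and alpha: "0 < \<alpha>" "\<alpha> < 2"
    and indep: "prob_space.indep_vars M (\<lambda>_. borel) X {1..}"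
    and ident: "\<And>j. j \<ge> 1 \<Longrightarrow> distr M borel (X j) = distr M borel (X 1)"
    and F0_def: "\<And>x. F0 x = measure M {\<omega> \<in> space M. X 1 \<omega> \<le> x}"
    and tail_pos: "((\<lambda>x. x powr \<alpha> * (1 - F0 x)) \<longlongrightarrow> c0p) at_top"
    and tail_neg: "((\<lambda>x. \<bar>x\<bar> powr \<alpha> * F0 x) \<longlongrightarrow> c0m) at_bot"
    and c0_pos: "c0p + c0m > 0"
    and alpha1: "\<alpha> = 1 \<Longrightarrow> c0p = c0m \<and>
        ((\<lambda>R. LINT x:{-R<..<R}|distr M borel (X 1). x) \<longlongrightarrow> \<gamma>0) at_top"
    and alpha_gt1: "\<alpha> > 1 \<Longrightarrow> integrable M (X 1) \<and> integral\<^sup>L M (X 1) = 0"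
    and b_nonneg: "\<And>j n. 1 \<le> j \<Longrightarrow> j \<le> n \<Longrightarrow> b j n \<ge> 0"
    and b_max: "(\<lambda>n. Max ((\<lambda>j. b j n) ` {1..n})) \<longlonglongrightarrow> 0"
    and b_sum: "(\<lambda>n. \<Sum>j=1..n. b j n powr \<alpha>) \<longlonglongrightarrow> 1"
    and xs_lim: "filterlim xs at_top sequentially"
  shows "(\<lambda>n. xs n powr \<alpha> *
            measure M {\<omega> \<in> space M. \<bar>\<Sum>j=1..n. b j n * X j \<omega>\<bar> > xs n})
           \<longlonglongrightarrow> c0p + c0m"
proof -
  interpret ps: prob_space M by (rule P)
  define X' where "X' i = (if i = 0 then (\<lambda>_. 0) else X i)" for i
  have X'1: "X' i = X i" if "i \<ge> 1" for i using that by (simp add: X'_def)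
  have Xm: "X' i \<in> borel_measurable M" for i
  proof (cases "i = 0")
    case True thus ?thesis by (simp add: X'_def)
  next
    case False
    hence "i \<in> {1..}" by simp
    hence "X i \<in> borel_measurable M" using indep unfolding ps.indep_vars_def by blast
    thus ?thesis using False by (simp add: X'_def)
  qed
  have indep': "ps.indep_vars (\<lambda>_. borel) X' {1..}"
    using indep by (subst ps.indep_vars_cong[where Y=X and N'="\<lambda>_. borel" and J="{1..}"]) (auto simp: X'1)
  have ident': "distr M borel (X' j) = distr M borel (X' 1)" if "j \<ge> 1" for j
    using ident[OF that] that by (simp add: X'1)
  have F0': "F0 = (\<lambda>x. measure M {\<omega> \<in> space M. X' 1 \<omega> \<le> x})"
    by (rule ext) (simp add: F0_def X'1)
  have hm: "hmain M X' \<alpha> c0p c0m"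
  proof -
    have "hsetup M X'" unfolding hsetup_def hsetup_axioms_def using P Xm indep' ident' by blast
    moreover have "hmain_axioms M X' \<alpha> c0p c0m" unfolding hmain_axioms_def
      using alpha tail_pos[unfolded F0'] tail_neg[unfolded F0'] by blast
    ultimately show ?thesis by (simp add: hmain_def)
  qed
  have a1: "((\<lambda>R. LINT x:{-R<..<R}|distr M borel (X' 1). x) \<longlongrightarrow> \<gamma>0) at_top" if "\<alpha> = 1"
    using alpha1[OF that] by (simp add: X'1)
  have a2: "integrable M (X' 1) \<and> (\<integral>\<omega>. X' 1 \<omega> \<partial>M) = 0" if "\<alpha> > 1"
    using alpha_gt1[OF that] by (simp add: X'1)
  have res: "(\<lambda>n. xs n powr \<alpha> * measure M {\<omega> \<in> space M. \<bar>\<Sum>j=1..n. b j n * X' j \<omega>\<bar> > xs n}) \<longlonglongrightarrow> c0p + c0m"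
    by (rule hmain.main_result[OF hm a1 a2 b_nonneg b_max b_sum xs_lim])
  have "(\<Sum>j=1..n. b j n * X' j \<omega>) = (\<Sum>j=1..n. b j n * X j \<omega>)" for n \<omega>
    by (intro sum.cong) (auto simp: X'1)
  thus ?thesis using res by simp
qed


end
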